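(* Let ${\bm X}=\{1,\dots,n\}$, ${\bm Y}=\{1,\dots,m\}$, let $m^{\bm X}$ ($n\times n$) and $m^{\bm Y}$ ($m\times m$) be row-stochastic transition matrices, $C\in\mathbb{R}_+^{n\times m}$ a cost matrix, $\delta\in(0,1]$, $\epsilon>0$. Let $C^{\epsilon,\delta,(\infty)}$ be the unique matrix satisfying $C^{\epsilon,\delta,(\infty)}_{ij}=\delta C_{ij}+(1-\delta)d^{\epsilon}_{\mathrm W}(m^{\bm X}_i,m^{\bm Y}_j;C^{\epsilon,\delta,(\infty)})$ for all $i,j$. For each $(i,j)$ let $P_{ij}=(P_{ij}^{kl})_{k,l}$ be the optimal (primal) plan and $f_{ij}=(f^k_{ij})_k$, $g_{ij}=(g^l_{ij})_l$ the dual solutions of the problem $d^\epsilon_{\mathrm W}(m^{\bm X}_i,m^{\bm Y}_j;C^{\epsilon,\delta,(\infty)})$. Define tensors $P=(P^{kl}_{ij})$, $F^{kk'}_{ij}=f^{k'}_{ij}\mathbb{1}_{i=k}$, $G^{ll'}_{ij}=g^{l'}_{ij}\mathbb{1}_{j=l}$, and the gradient tensors $\Delta^{kl}_{ij}=\partial C^{\epsilon,\delta,(\infty)}_{ij}/\partial C_{kl}$, $\Gamma^{kk'}_{ij}=\partial C^{\epsilon,\delta,(\infty)}_{ij}/\partial m^{\bm X}_{kk'}$, $\Theta^{ll'}_{ij}=\partial C^{\epsilon,\delta,(\infty)}_{ij}/\partial m^{\bm Y}_{ll'}$. Viewing these tensors as matrices with rows indexed by the pair $(i,j)$ and columns by the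 upper index pair (so $P$ and $\Delta$ are $nm\times nm$), and letting $I_{nm}$ be the $nm\times nm$ identity, $$\Delta=\delta\big(I_{nm}-(1-\delta)P\big)^{-1},\quad\Gamma=(1-\delta)\big(I_{nm}-(1-\delta)P\big)^{-1}F,\quad\Theta=(1-\delta)\big(I_{nm}-(1-\delta)P\big)^{-1}G.$$
   Context: For $\alpha\in\mathcal{P}({\bm X}),\beta\in\mathcal{P}({\bm Y})$ and cost $D$, $d^{\epsilon}_{\mathrm W}(\alpha,\beta;D)=\min_{P\in\mathcal{C}(\alpha,\beta)}\sum_{k,l}P_{kl}D_{kl}+\epsilon\sum_{k,l}P_{kl}\log P_{kl}$, where $\mathcal{C}(\alpha,\beta)$ is the set of nonnegative $n\times m$ matrices with row sums $\alpha$ and column sums $\beta$; the dual solutions $f,g$ are the optimal dual variables (potentials) associated with the row- and column-marginal constraints. $m^{\bm X}_i$ denotes the $i$-th row of $m^{\bm X}$, $m^{\bm X}_{kk'}$ its $(k,k')$ entry. *)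

theory Defs
  imports "HOL-Analysis.Analysis"
begin

text \<open>Finite index sets X and Y are rendered as finite types 'x and 'y.
  Vectors alpha on X are real^'x; n x m matrices are real^'y^'x (row k, column l: P$k$l).\<close>

definition xlogx :: "real \<Rightarrow> real" where
  "xlogx t = (if t = 0 then 0 else t * ln t)"

definition couplings :: "real^'x \<Rightarrow> real^'y \<Rightarrow> (real^'y^'x) set" where
  "couplings \<alpha> \<beta> = {P. (\<forall>k l. 0 \<le> P$k$l) \<and> (\<forall>k. (\<Sum>l\<in>UNIV. P$k$l) = \<alpha>$k)
                        \<and> (\<forall>l. (\<Sum>k\<in>UNIV. P$k$l) = \<beta>$l)}"

definition ent_obj :: "real \<Rightarrow> real^'y^'x \<Rightarrow> real^'y^'x \<Rightarrow> real" where
  "ent_obj \<epsilon> D P = (\<Sum>k\<in>UNIV. \<Sum>l\<in>UNIV. P$k$l * D$k$l) + \<epsilon> * (\<Sum>k\<in>UNIV. \<Sum>l\<in>UNIV. xlogx (P$k$l))"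

definition dW :: "real \<Rightarrow> real^'x \<Rightarrow> real^'y \<Rightarrow> real^'y^'x \<Rightarrow> real" where
  "dW \<epsilon> \<alpha> \<beta> D = Inf (ent_obj \<epsilon> D ` couplings \<alpha> \<beta>)"

definition is_opt_plan :: "real \<Rightarrow> real^'x \<Rightarrow> real^'y \<Rightarrow> real^'y^'x \<Rightarrow> real^'y^'x \<Rightarrow> bool" where
  "is_opt_plan \<epsilon> \<alpha> \<beta> D P \<longleftrightarrow> P \<in> couplings \<alpha> \<beta> \<and>
     (\<forall>Q\<in>couplings \<alpha> \<beta>. ent_obj \<epsilon> D P \<le> ent_obj \<epsilon> D Q)"

definition lagrangian :: "real \<Rightarrow> real^'x \<Rightarrow> real^'y \<Rightarrow> real^'y^'x \<Rightarrow> real^'x \<Rightarrow> real^'y \<Rightarrow> real^'y^'x \<Rightarrow> real" where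
  "lagrangian \<epsilon> \<alpha> \<beta> D f g P = ent_obj \<epsilon> D P
     - (\<Sum>k\<in>UNIV. f$k * ((\<Sum>l\<in>UNIV. P$k$l) - \<alpha>$k))
     - (\<Sum>l\<in>UNIV. g$l * ((\<Sum>k\<in>UNIV. P$k$l) - \<beta>$l))"

definition dual_fun :: "real \<Rightarrow> real^'x \<Rightarrow> real^'y \<Rightarrow> real^'y^'x \<Rightarrow> real^'x \<Rightarrow> real^'y \<Rightarrow> real" where
  "dual_fun \<epsilon> \<alpha> \<beta> D f g = Inf {lagrangian \<epsilon> \<alpha> \<beta> D f g P | P. \<forall>k l. 0 \<le> P$k$l}"

definition is_dual_opt :: "real \<Rightarrow> real^'x \<Rightarrow> real^'y \<Rightarrow> real^'y^'x \<Rightarrow> real^'x \<Rightarrow> real^'y \<Rightarrow> bool" where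
  "is_dual_opt \<epsilon> \<alpha> \<beta> D f g \<longleftrightarrow> (\<forall>f' g'. dual_fun \<epsilon> \<alpha> \<beta> D f' g' \<le> dual_fun \<epsilon> \<alpha> \<beta> D f g)"

definition row_stochastic :: "real^'a^'b \<Rightarrow> bool" where
  "row_stochastic M \<longleftrightarrow> (\<forall>i j. 0 \<le> M$i$j) \<and> (\<forall>i. (\<Sum>j\<in>UNIV. M$i$j) = 1)"

definition is_fixed_cost :: "real \<Rightarrow> real \<Rightarrow> real^'y^'x \<Rightarrow> real^'x^'x \<Rightarrow> real^'y^'y \<Rightarrow> real^'y^'x \<Rightarrow> bool" where
  "is_fixed_cost \<delta> \<epsilon> C mX mY D \<longleftrightarrow>
     (\<forall>i j. D$i$j = \<delta> * C$i$j + (1 - \<delta>) * dW \<epsilon> (mX$i) (mY$j) D)"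

definition Cinf :: "real \<Rightarrow> real \<Rightarrow> real^'y^'x \<Rightarrow> real^'x^'x \<Rightarrow> real^'y^'y \<Rightarrow> real^'y^'x" where
  "Cinf \<delta> \<epsilon> C mX mY = (THE D. is_fixed_cost \<delta> \<epsilon> C mX mY D)"

end

theory Submission
  imports Defs
begin


lemma xlogx_tangent:
  assumes p: "0 \<le> p" and q: "0 < q"
  shows "xlogx q + (ln q + 1) * (p - q) \<le> xlogx p"
    and "p \<noteq> q \<Longrightarrow> xlogx q + (ln q + 1) * (p - q) < xlogx p"
proof -
  have key: "xlogx p - (xlogx q + (ln q + 1) * (p - q)) = (if p = 0 then q else p * (q/p - 1 - ln (q/p)))"
    using p q by (auto simp: xlogx_def ln_div field_simps)
  have ge: "0 \<le> p * (q/p - 1 - ln (q/p))" if "p > 0"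
    using ln_le_minus_one[of "q/p"] that q by (intro mult_nonneg_nonneg) auto
  have gt: "0 < p * (q/p - 1 - ln (q/p))" if "p > 0" "p \<noteq> q"
  proof -
    have "ln (q/p) \<noteq> q/p - 1"
    proof
      assume "ln (q/p) = q/p - 1"
      then have "q/p = 1" using ln_eq_minus_one[of "q/p"] that q by auto
      then show False using that by (auto simp: field_simps)
    qed
    then have "ln (q/p) < q/p - 1" using ln_le_minus_one[of "q/p"] that q by auto
    then show ?thesis using that by auto
  qed
  show "xlogx q + (ln q + 1) * (p - q) \<le> xlogx p"
    using key ge q p by (cases "p = 0") auto
  show "p \<noteq> q \<Longrightarrow> xlogx q + (ln q + 1) * (p - q) < xlogx p"
    using key gt q p by (cases "p = 0") auto
qed

lemma xlogx_upper:
  assumes p: "0 \<le> p" and q: "0 < q"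
  shows "xlogx p \<le> xlogx q + (ln q + 1) * (p - q) + (p - q)^2 / q"
proof (cases "p = 0")
  case True
  then show ?thesis using q by (simp add: xlogx_def power2_eq_square field_simps)
next
  case False
  then have pp: "p > 0" using p by auto
  have "ln (p/q) \<le> p/q - 1" using ln_le_minus_one[of "p/q"] pp q by auto
  then have "p * ln (p/q) \<le> p * (p/q - 1)" using pp by (intro mult_left_mono) auto
  moreover have "xlogx q + (ln q + 1) * (p - q) + (p - q)^2 / q - xlogx p = p * (p/q - 1) - p * ln (p/q) "
    using pp q by (simp add: xlogx_def ln_div power2_eq_square field_simps)
  ultimately show ?thesis by linarith
qed

lemma term_lower:
  fixes a \<epsilon> p :: real
  assumes e: "0 < \<epsilon>" and p: "0 \<le> p"
  shows "- \<epsilon> * exp (- a / \<epsilon> - 1) \<le> p * a + \<epsilon> * xlogx p"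
    and "p \<noteq> exp (- a / \<epsilon> - 1) \<Longrightarrow> - \<epsilon> * exp (- a / \<epsilon> - 1) < p * a + \<epsilon> * xlogx p"
    and "exp (- a / \<epsilon> - 1) * a + \<epsilon> * xlogx (exp (- a / \<epsilon> - 1)) = - \<epsilon> * exp (- a / \<epsilon> - 1)"
proof -
  define q where "q = exp (- a / \<epsilon> - 1)"
  have q: "q > 0" by (simp add: q_def)
  have lq: "ln q = - a / \<epsilon> - 1" by (simp add: q_def)
  have xq: "xlogx q = q * (- a / \<epsilon> - 1)" using q lq by (simp add: xlogx_def)
  have eq: "\<epsilon> * (xlogx q + (ln q + 1) * (p - q)) = - \<epsilon> * q - p * a"
    using e unfolding xq lq by (simp add: field_simps)
  show "- \<epsilon> * exp (- a / \<epsilon> - 1) \<le> p * a + \<epsilon> * xlogx p"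
    using mult_left_mono[OF xlogx_tangent(1)[OF p q], of \<epsilon>] e eq unfolding q_def by linarith
  show "p \<noteq> exp (- a / \<epsilon> - 1) \<Longrightarrow> - \<epsilon> * exp (- a / \<epsilon> - 1) < p * a + \<epsilon> * xlogx p"
  proof -
    assume "p \<noteq> exp (- a / \<epsilon> - 1)"
    then have "\<epsilon> * (xlogx q + (ln q + 1) * (p - q)) < \<epsilon> * xlogx p"
      using mult_strict_left_mono[OF xlogx_tangent(2)[OF p q], of \<epsilon>] e unfolding q_def by auto
    then show ?thesis using eq unfolding q_def by linarith
  qed
  show "exp (- a / \<epsilon> - 1) * a + \<epsilon> * xlogx (exp (- a / \<epsilon> - 1)) = - \<epsilon> * exp (- a / \<epsilon> - 1)"
    using e unfolding q_def[symmetric] xq by (simp add: field_simps)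
qed



lemma term_lower2:
  fixes c \<epsilon> p :: real
  assumes e: "0 < \<epsilon>" and p: "0 \<le> p"
  shows "- \<epsilon> * exp (c / \<epsilon> - 1) \<le> p * (- c) + \<epsilon> * xlogx p"
    and "p \<noteq> exp (c / \<epsilon> - 1) \<Longrightarrow> - \<epsilon> * exp (c / \<epsilon> - 1) < p * (- c) + \<epsilon> * xlogx p"
    and "exp (c / \<epsilon> - 1) * (- c) + \<epsilon> * xlogx (exp (c / \<epsilon> - 1)) = - \<epsilon> * exp (c / \<epsilon> - 1)"
  using term_lower[OF e p, of "- c"] by auto

definition Qf :: "real \<Rightarrow> real^'y^'x \<Rightarrow> real^'x \<Rightarrow> real^'y \<Rightarrow> real^'y^'x" where
  "Qf \<epsilon> D f g = (\<chi> k l. exp ((f$k + g$l - D$k$l) / \<epsilon> - 1))"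

definition dv :: "real \<Rightarrow> real^'x \<Rightarrow> real^'y \<Rightarrow> real^'y^'x \<Rightarrow> real^'x \<Rightarrow> real^'y \<Rightarrow> real" where
  "dv \<epsilon> \<alpha> \<beta> D f g = (\<Sum>k\<in>UNIV. f$k * \<alpha>$k) + (\<Sum>l\<in>UNIV. g$l * \<beta>$l)
     - \<epsilon> * (\<Sum>k\<in>UNIV. \<Sum>l\<in>UNIV. exp ((f$k + g$l - D$k$l) / \<epsilon> - 1))"

lemma lagrangian_alt:
  "lagrangian \<epsilon> \<alpha> \<beta> D f g P =
     (\<Sum>k\<in>UNIV. \<Sum>l\<in>UNIV. P$k$l * (- (f$k + g$l - D$k$l)) + \<epsilon> * xlogx (P$k$l))
     + (\<Sum>k\<in>UNIV. f$k * \<alpha>$k) + (\<Sum>l\<in>UNIV. g$l * \<beta>$l)"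
proof -
  have 1: "(\<Sum>k\<in>UNIV. f$k * ((\<Sum>l\<in>UNIV. P$k$l) - \<alpha>$k)) =
      (\<Sum>k\<in>UNIV. \<Sum>l\<in>UNIV. P$k$l * f$k) - (\<Sum>k\<in>UNIV. f$k * \<alpha>$k)"
    by (simp add: right_diff_distrib sum_distrib_left sum_subtractf mult.commute)
  have 2: "(\<Sum>l\<in>UNIV. g$l * ((\<Sum>k\<in>UNIV. P$k$l) - \<beta>$l)) =
      (\<Sum>k\<in>UNIV. \<Sum>l\<in>UNIV. P$k$l * g$l) - (\<Sum>l\<in>UNIV. g$l * \<beta>$l)"
  proof -
    have "(\<Sum>k\<in>UNIV. \<Sum>l\<in>UNIV. P$k$l * g$l) = (\<Sum>l\<in>UNIV. \<Sum>k\<in>UNIV. P$k$l * g$l)"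
      by (rule sum.swap)
    then show ?thesis
      by (simp add: right_diff_distrib sum_distrib_left sum_subtractf mult.commute)
  qed
  show ?thesis
    unfolding lagrangian_def ent_obj_def 1 2
    by (simp add: right_diff_distrib sum.distrib sum_subtractf sum_distrib_left algebra_simps)
qed

lemma lagrangian_lower:
  assumes e: "0 < \<epsilon>" and P: "\<forall>k l. 0 \<le> P$k$l"
  shows "dv \<epsilon> \<alpha> \<beta> D f g \<le> lagrangian \<epsilon> \<alpha> \<beta> D f g P"
proof -
  have "(\<Sum>k\<in>UNIV. \<Sum>l\<in>UNIV. - \<epsilon> * exp ((f$k + g$l - D$k$l) / \<epsilon> - 1)) \<le>
        (\<Sum>k\<in>UNIV. \<Sum>l\<in>UNIV. P$k$l * (- (f$k + g$l - D$k$l)) + \<epsilon> * xlogx (P$k$l))"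
    by (intro sum_mono term_lower2(1) e P[rule_format])
  moreover have "(\<Sum>k\<in>UNIV. \<Sum>l\<in>UNIV. - \<epsilon> * exp ((f$k + g$l - D$k$l) / \<epsilon> - 1))
     = - \<epsilon> * (\<Sum>k\<in>UNIV. \<Sum>l\<in>UNIV. exp ((f$k + g$l - D$k$l) / \<epsilon> - 1))"
    by (simp only: sum_distrib_left)
  ultimately show ?thesis unfolding lagrangian_alt dv_def by linarith
qed

lemma lagrangian_Qf:
  assumes e: "0 < \<epsilon>"
  shows "lagrangian \<epsilon> \<alpha> \<beta> D f g (Qf \<epsilon> D f g) = dv \<epsilon> \<alpha> \<beta> D f g"
proof -
  have "(\<Sum>k\<in>UNIV. \<Sum>l\<in>UNIV. Qf \<epsilon> D f g$k$l * (- (f$k + g$l - D$k$l)) + \<epsilon> * xlogx (Qf \<epsilon> D f g$k$l))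
       = (\<Sum>k\<in>UNIV. \<Sum>l\<in>UNIV. - \<epsilon> * exp ((f$k + g$l - D$k$l) / \<epsilon> - 1))"
    unfolding Qf_def vec_lambda_beta by (intro sum.cong refl term_lower2(3)[OF e order_refl]) 
  moreover have "(\<Sum>k\<in>UNIV. \<Sum>l\<in>UNIV. - \<epsilon> * exp ((f$k + g$l - D$k$l) / \<epsilon> - 1))
     = - \<epsilon> * (\<Sum>k\<in>UNIV. \<Sum>l\<in>UNIV. exp ((f$k + g$l - D$k$l) / \<epsilon> - 1))"
    by (simp only: sum_distrib_left)
  ultimately show ?thesis unfolding lagrangian_alt dv_def by linarith
qed

lemma dual_fun_eq:
  assumes e: "0 < \<epsilon>"
  shows "dual_fun \<epsilon> \<alpha> \<beta> D f g = dv \<epsilon> \<alpha> \<beta> D f g"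
  unfolding dual_fun_def
proof (rule cInf_eq_minimum)
  have Q: "\<forall>k l. 0 \<le> Qf \<epsilon> D f g $ k $ l" by (simp add: Qf_def)
  show "dv \<epsilon> \<alpha> \<beta> D f g \<in> {lagrangian \<epsilon> \<alpha> \<beta> D f g P |P. \<forall>k l. 0 \<le> P $ k $ l}"
    unfolding mem_Collect_eq
  proof (rule exI[of _ "Qf \<epsilon> D f g"], rule conjI)
    show "dv \<epsilon> \<alpha> \<beta> D f g = lagrangian \<epsilon> \<alpha> \<beta> D f g (Qf \<epsilon> D f g)"
      using lagrangian_Qf[OF e, of \<alpha> \<beta> D f g] by simp
  qed (rule Q)
next
  fix y assume "y \<in> {lagrangian \<epsilon> \<alpha> \<beta> D f g P |P. \<forall>k l. 0 \<le> P $ k $ l}"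
  then obtain P where "y = lagrangian \<epsilon> \<alpha> \<beta> D f g P" "\<forall>k l. 0 \<le> P $ k $ l" by blast
  then show "dv \<epsilon> \<alpha> \<beta> D f g \<le> y" using lagrangian_lower[OF e] by simp
qed

lemma dv_shift_f:
  assumes e: "0 < \<epsilon>"
  shows "dv \<epsilon> \<alpha> \<beta> D (\<chi> k'. f$k' + (if k' = k then t else 0)) g =
     dv \<epsilon> \<alpha> \<beta> D f g + t * \<alpha>$k - \<epsilon> * (exp (t/\<epsilon>) - 1) * (\<Sum>l\<in>UNIV. Qf \<epsilon> D f g $k$l)"
proof -
  have 1: "(\<Sum>k'\<in>UNIV. (f$k' + (if k' = k then t else 0)) * \<alpha>$k') = (\<Sum>k'\<in>UNIV. f$k' * \<alpha>$k') + t * \<alpha>$k"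
  proof -
    have "(\<Sum>k'\<in>UNIV. (f$k' + (if k' = k then t else 0)) * \<alpha>$k') = (\<Sum>k'\<in>UNIV. f$k' * \<alpha>$k' + (if k' = k then t * \<alpha>$k' else 0))"
      by (intro sum.cong) (auto simp: algebra_simps)
    also have "\<dots> = (\<Sum>k'\<in>UNIV. f$k' * \<alpha>$k') + t * \<alpha>$k"
      by (simp add: sum.distrib)
    finally show ?thesis .
  qed
  have 2: "exp ((f$k' + (if k' = k then t else 0) + g$l - D$k'$l) / \<epsilon> - 1)
     = exp ((f$k' + g$l - D$k'$l) / \<epsilon> - 1) + (if k' = k then (exp (t/\<epsilon>) - 1) * exp ((f$k' + g$l - D$k'$l) / \<epsilon> - 1) else 0)" for k' l
  proof (cases "k' = k")
    case True
    have "exp ((f$k' + t + g$l - D$k'$l) / \<epsilon> - 1) = exp (t/\<epsilon>) * exp ((f$k' + g$l - D$k'$l) / \<epsilon> - 1)"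
      unfolding exp_add[symmetric] using e by (simp add: field_simps)
    then show ?thesis using True by (simp add: algebra_simps)
  qed simp
  have 3: "(\<Sum>k'\<in>UNIV. \<Sum>l\<in>UNIV. exp ((f$k' + (if k' = k then t else 0) + g$l - D$k'$l) / \<epsilon> - 1))
     = (\<Sum>k'\<in>UNIV. \<Sum>l\<in>UNIV. exp ((f$k' + g$l - D$k'$l) / \<epsilon> - 1)) + (exp (t/\<epsilon>) - 1) * (\<Sum>l\<in>UNIV. Qf \<epsilon> D f g $k$l)"
  proof -
    have "\<And>k'. (\<Sum>l\<in>UNIV. (if k' = k then (exp (t/\<epsilon>) - 1) * exp ((f$k' + g$l - D$k'$l) / \<epsilon> - 1) else 0))
       = (if k' = k then (exp (t/\<epsilon>) - 1) * (\<Sum>l\<in>UNIV. Qf \<epsilon> D f g $k$l) else 0)"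
      by (simp add: Qf_def sum_distrib_left)
    then show ?thesis unfolding 2 sum.distrib by simp
  qed
  show ?thesis unfolding dv_def vec_lambda_beta 3 1 by (simp add: algebra_simps)
qed

lemma dual_opt_marg_f:
  assumes e: "0 < \<epsilon>" and opt: "is_dual_opt \<epsilon> \<alpha> \<beta> D f g"
  shows "(\<Sum>l\<in>UNIV. Qf \<epsilon> D f g $k$l) = \<alpha>$k"
proof -
  define S where "S = (\<Sum>l\<in>UNIV. Qf \<epsilon> D f g $k$l)"
  define h where "h t = t * \<alpha>$k - \<epsilon> * (exp (t/\<epsilon>) - 1) * S" for t
  have d: "(h has_real_derivative (\<alpha>$k - S)) (at 0)"
    unfolding h_def using e by (auto intro!: derivative_eq_intros)
  have "h t \<le> h 0" for t
  proof -
    have "dual_fun \<epsilon> \<alpha> \<beta> D (\<chi> k'. f$k' + (if k' = k then t else 0)) g \<le> dual_fun \<epsilon> \<alpha> \<beta> D f g"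
      using opt unfolding is_dual_opt_def by blast
    then show ?thesis unfolding dual_fun_eq[OF e] dv_shift_f[OF e] h_def S_def by simp
  qed
  then have "\<alpha>$k - S = 0" by (intro DERIV_local_max[OF d, of 1]) auto
  then show ?thesis unfolding S_def by simp
qed

lemma dv_shift_g:
  assumes e: "0 < \<epsilon>"
  shows "dv \<epsilon> \<alpha> \<beta> D f (\<chi> l'. g$l' + (if l' = l then t else 0)) =
     dv \<epsilon> \<alpha> \<beta> D f g + t * \<beta>$l - \<epsilon> * (exp (t/\<epsilon>) - 1) * (\<Sum>k\<in>UNIV. Qf \<epsilon> D f g $k$l)"
proof -
  have 1: "(\<Sum>l'\<in>UNIV. (g$l' + (if l' = l then t else 0)) * \<beta>$l') = (\<Sum>l'\<in>UNIV. g$l' * \<beta>$l') + t * \<beta>$l"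
  proof -
    have "(\<Sum>l'\<in>UNIV. (g$l' + (if l' = l then t else 0)) * \<beta>$l') = (\<Sum>l'\<in>UNIV. g$l' * \<beta>$l' + (if l' = l then t * \<beta>$l' else 0))"
      by (intro sum.cong) (auto simp: algebra_simps)
    also have "\<dots> = (\<Sum>l'\<in>UNIV. g$l' * \<beta>$l') + t * \<beta>$l"
      by (simp add: sum.distrib)
    finally show ?thesis .
  qed
  have 2: "exp ((f$k + (g$l' + (if l' = l then t else 0)) - D$k$l') / \<epsilon> - 1)
     = exp ((f$k + g$l' - D$k$l') / \<epsilon> - 1) + (if l' = l then (exp (t/\<epsilon>) - 1) * exp ((f$k + g$l' - D$k$l') / \<epsilon> - 1) else 0)" for k l'
  proof (cases "l' = l")
    case True
    have "exp ((f$k + (g$l' + t) - D$k$l') / \<epsilon> - 1) = exp (t/\<epsilon>) * exp ((f$k + g$l' - D$k$l') / \<epsilon> - 1)"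
      unfolding exp_add[symmetric] using e by (simp add: field_simps)
    then show ?thesis using True by (simp add: algebra_simps)
  qed simp
  have 3: "(\<Sum>k\<in>UNIV. \<Sum>l'\<in>UNIV. exp ((f$k + (g$l' + (if l' = l then t else 0)) - D$k$l') / \<epsilon> - 1))
     = (\<Sum>k\<in>UNIV. \<Sum>l'\<in>UNIV. exp ((f$k + g$l' - D$k$l') / \<epsilon> - 1)) + (exp (t/\<epsilon>) - 1) * (\<Sum>k\<in>UNIV. Qf \<epsilon> D f g $k$l)"
  proof -
    have "\<And>k. (\<Sum>l'\<in>UNIV. (if l' = l then (exp (t/\<epsilon>) - 1) * exp ((f$k + g$l' - D$k$l') / \<epsilon> - 1) else 0))
       = (exp (t/\<epsilon>) - 1) * Qf \<epsilon> D f g $k$l"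
      by (simp add: Qf_def)
    then show ?thesis unfolding 2 sum.distrib by (simp add: sum_distrib_left Qf_def)
  qed
  show ?thesis unfolding dv_def vec_lambda_beta 3 1 by (simp add: algebra_simps)
qed

lemma dual_opt_marg_g:
  assumes e: "0 < \<epsilon>" and opt: "is_dual_opt \<epsilon> \<alpha> \<beta> D f g"
  shows "(\<Sum>k\<in>UNIV. Qf \<epsilon> D f g $k$l) = \<beta>$l"
proof -
  define S where "S = (\<Sum>k\<in>UNIV. Qf \<epsilon> D f g $k$l)"
  define h where "h t = t * \<beta>$l - \<epsilon> * (exp (t/\<epsilon>) - 1) * S" for t
  have d: "(h has_real_derivative (\<beta>$l - S)) (at 0)"
    unfolding h_def using e by (auto intro!: derivative_eq_intros)
  have "h t \<le> h 0" for t
  proof -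
    have "dual_fun \<epsilon> \<alpha> \<beta> D f (\<chi> l'. g$l' + (if l' = l then t else 0)) \<le> dual_fun \<epsilon> \<alpha> \<beta> D f g"
      using opt unfolding is_dual_opt_def by blast
    then show ?thesis unfolding dual_fun_eq[OF e] dv_shift_g[OF e] h_def S_def by simp
  qed
  then have "\<beta>$l - S = 0" by (intro DERIV_local_max[OF d, of 1]) auto
  then show ?thesis unfolding S_def by simp
qed

lemma Qf_coupling:
  assumes e: "0 < \<epsilon>" and opt: "is_dual_opt \<epsilon> \<alpha> \<beta> D f g"
  shows "Qf \<epsilon> D f g \<in> couplings \<alpha> \<beta>"
  unfolding couplings_def using dual_opt_marg_f[OF e opt] dual_opt_marg_g[OF e opt]
  by (auto simp: Qf_def)

lemma ent_obj_eq_lagrangian: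
  assumes "P \<in> couplings \<alpha> \<beta>"
  shows "ent_obj \<epsilon> D P = lagrangian \<epsilon> \<alpha> \<beta> D f g P"
  using assms unfolding couplings_def lagrangian_def by simp

lemma opt_plan_eq_Qf:
  assumes e: "0 < \<epsilon>" and dopt: "is_dual_opt \<epsilon> \<alpha> \<beta> D f g" and popt: "is_opt_plan \<epsilon> \<alpha> \<beta> D P"
  shows "P = Qf \<epsilon> D f g"
proof (rule ccontr)
  assume ne: "P \<noteq> Qf \<epsilon> D f g"
  then obtain k0 l0 where ne0: "P$k0$l0 \<noteq> Qf \<epsilon> D f g $k0$l0"
    by (metis vec_eq_iff)
  have Pc: "P \<in> couplings \<alpha> \<beta>" using popt unfolding is_opt_plan_def by simp
  have P0: "0 \<le> P$k$l" for k l using Pc unfolding couplings_def by simp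
  have le: "- \<epsilon> * Qf \<epsilon> D f g $k$l \<le> P$k$l * (- (f$k + g$l - D$k$l)) + \<epsilon> * xlogx (P$k$l)" for k l
    unfolding Qf_def vec_lambda_beta by (rule term_lower2(1)[OF e P0])
  have lt: "- \<epsilon> * Qf \<epsilon> D f g $k0$l0 < P$k0$l0 * (- (f$k0 + g$l0 - D$k0$l0)) + \<epsilon> * xlogx (P$k0$l0)"
    using ne0 unfolding Qf_def vec_lambda_beta by (intro term_lower2(2)[OF e P0])
  have "(\<Sum>l\<in>UNIV. - \<epsilon> * Qf \<epsilon> D f g $k0$l) < (\<Sum>l\<in>UNIV. P$k0$l * (- (f$k0 + g$l - D$k0$l)) + \<epsilon> * xlogx (P$k0$l))"
    by (rule sum_strict_mono_ex1) (use le lt in auto)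
  note lt1 = this
  have "(\<Sum>k\<in>UNIV. \<Sum>l\<in>UNIV. - \<epsilon> * Qf \<epsilon> D f g $k$l) < (\<Sum>k\<in>UNIV. \<Sum>l\<in>UNIV. P$k$l * (- (f$k + g$l - D$k$l)) + \<epsilon> * xlogx (P$k$l))"
  proof (rule sum_strict_mono_ex1)
    show "\<forall>x\<in>UNIV. (\<Sum>l\<in>UNIV. - \<epsilon> * Qf \<epsilon> D f g $x$l) \<le> (\<Sum>l\<in>UNIV. P$x$l * (- (f$x + g$l - D$x$l)) + \<epsilon> * xlogx (P$x$l))"
      by (intro ballI sum_mono le)
  qed (use lt1 in auto)
  moreover have "(\<Sum>k\<in>UNIV. \<Sum>l\<in>UNIV. - \<epsilon> * Qf \<epsilon> D f g $k$l)
     = - \<epsilon> * (\<Sum>k\<in>UNIV. \<Sum>l\<in>UNIV. exp ((f$k + g$l - D$k$l) / \<epsilon> - 1))"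
    by (simp only: sum_distrib_left Qf_def vec_lambda_beta)
  ultimately have "dv \<epsilon> \<alpha> \<beta> D f g < lagrangian \<epsilon> \<alpha> \<beta> D f g P"
    unfolding lagrangian_alt dv_def by linarith
  also have "\<dots> = ent_obj \<epsilon> D P" using ent_obj_eq_lagrangian[OF Pc] by simp
  also have "\<dots> \<le> ent_obj \<epsilon> D (Qf \<epsilon> D f g)"
    using popt Qf_coupling[OF e dopt] unfolding is_opt_plan_def by blast
  also have "\<dots> = dv \<epsilon> \<alpha> \<beta> D f g"
    using ent_obj_eq_lagrangian[OF Qf_coupling[OF e dopt], of \<epsilon> D f g] lagrangian_Qf[OF e, of \<alpha> \<beta> D f g] by simp
  finally show False by simp
qed



definition pv :: "real^'a \<Rightarrow> bool" where
  "pv \<alpha> \<longleftrightarrow> (\<forall>k. 0 \<le> \<alpha>$k) \<and> (\<Sum>k\<in>UNIV. \<alpha>$k) = 1"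

lemma row_stochastic_pv: "row_stochastic M \<Longrightarrow> pv (M$i)"
  unfolding row_stochastic_def pv_def by auto

lemma pv_le1: "pv \<alpha> \<Longrightarrow> \<alpha>$k \<le> 1"
proof -
  assume "pv \<alpha>"
  then have "\<alpha>$k \<le> (\<Sum>k\<in>UNIV. \<alpha>$k)" unfolding pv_def by (intro member_le_sum) auto
  then show ?thesis using \<open>pv \<alpha>\<close> unfolding pv_def by simp
qed

lemma prod_coupling:
  assumes "pv \<alpha>" "pv \<beta>"
  shows "(\<chi> k l. \<alpha>$k * \<beta>$l) \<in> couplings \<alpha> \<beta>"
  using assms unfolding couplings_def pv_def
  by (auto simp: sum_distrib_left[symmetric] sum_distrib_right[symmetric])

lemma coupling_nonneg: "Q \<in> couplings \<alpha> \<beta> \<Longrightarrow> 0 \<le> Q$k$l"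
  unfolding couplings_def by auto

lemma coupling_mass:
  assumes "Q \<in> couplings \<alpha> \<beta>" "pv \<alpha>"
  shows "(\<Sum>k\<in>UNIV. \<Sum>l\<in>UNIV. Q$k$l) = 1"
  using assms unfolding couplings_def pv_def by auto

lemma ent_obj_lower:
  assumes e: "0 < \<epsilon>" and Q: "\<forall>k l. 0 \<le> Q$k$l"
  shows "(\<Sum>k\<in>UNIV. \<Sum>l\<in>UNIV. - \<epsilon> * exp (- D$k$l / \<epsilon> - 1)) \<le> ent_obj \<epsilon> D Q"
proof -
  have "(\<Sum>k\<in>UNIV. \<Sum>l\<in>UNIV. - \<epsilon> * exp (- D$k$l / \<epsilon> - 1)) \<le>
     (\<Sum>k\<in>UNIV. \<Sum>l\<in>UNIV. Q$k$l * (- (- D$k$l)) + \<epsilon> * xlogx (Q$k$l))"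
    by (intro sum_mono term_lower2(1)[OF e] Q[rule_format])
  then show ?thesis unfolding ent_obj_def by (simp add: sum.distrib sum_distrib_left)
qed

lemma ent_bdd:
  assumes e: "0 < \<epsilon>"
  shows "bdd_below (ent_obj \<epsilon> D ` couplings \<alpha> \<beta>)"
  using ent_obj_lower[OF e] unfolding couplings_def bdd_below_def by blast

lemma dW_le:
  assumes e: "0 < \<epsilon>" and Q: "Q \<in> couplings \<alpha> \<beta>"
  shows "dW \<epsilon> \<alpha> \<beta> D \<le> ent_obj \<epsilon> D Q"
  unfolding dW_def by (rule cInf_lower) (use Q ent_bdd[OF e] in auto)

lemma dW_ge:
  assumes "pv \<alpha>" "pv \<beta>" and b: "\<And>Q. Q \<in> couplings \<alpha> \<beta> \<Longrightarrow> b \<le> ent_obj \<epsilon> D Q"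
  shows "b \<le> dW \<epsilon> \<alpha> \<beta> D"
  unfolding dW_def by (rule cInf_greatest) (use prod_coupling[OF assms(1,2)] b in auto)

lemma ent_obj_diff:
  assumes Q: "Q \<in> couplings \<alpha> \<beta>" and a: "pv \<alpha>" and r: "\<forall>k l. \<bar>D$k$l - D'$k$l\<bar> \<le> r"
  shows "ent_obj \<epsilon> D Q \<le> ent_obj \<epsilon> D' Q + r"
proof -
  have "(\<Sum>k\<in>UNIV. \<Sum>l\<in>UNIV. Q$k$l * D$k$l) \<le> (\<Sum>k\<in>UNIV. \<Sum>l\<in>UNIV. Q$k$l * D'$k$l + Q$k$l * r)"
  proof (intro sum_mono)
    fix k l
    have "Q$k$l * (D$k$l - D'$k$l) \<le> Q$k$l * r"
      using coupling_nonneg[OF Q] r by (intro mult_left_mono) (auto simp: abs_le_iff)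
    then show "Q$k$l * D$k$l \<le> Q$k$l * D'$k$l + Q$k$l * r" by (simp add: algebra_simps)
  qed
  also have "\<dots> = (\<Sum>k\<in>UNIV. \<Sum>l\<in>UNIV. Q$k$l * D'$k$l) + r"
    using coupling_mass[OF Q a] by (simp add: sum.distrib sum_distrib_right[symmetric])
  finally show ?thesis unfolding ent_obj_def by simp
qed

lemma dW_lip:
  assumes e: "0 < \<epsilon>" and a: "pv \<alpha>" and b: "pv \<beta>" and r: "\<forall>k l. \<bar>D$k$l - D'$k$l\<bar> \<le> r"
  shows "\<bar>dW \<epsilon> \<alpha> \<beta> D - dW \<epsilon> \<alpha> \<beta> D'\<bar> \<le> r"
proof -
  have 1: "dW \<epsilon> \<alpha> \<beta> D - r \<le> dW \<epsilon> \<alpha> \<beta> D'"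
  proof (rule dW_ge[OF a b])
    fix Q assume Q: "Q \<in> couplings \<alpha> \<beta>"
    show "dW \<epsilon> \<alpha> \<beta> D - r \<le> ent_obj \<epsilon> D' Q"
      using dW_le[OF e Q, of D] ent_obj_diff[OF Q a r, of \<epsilon>] by linarith
  qed
  have r': "\<forall>k l. \<bar>D'$k$l - D$k$l\<bar> \<le> r" using r by (simp add: abs_minus_commute)
  have 2: "dW \<epsilon> \<alpha> \<beta> D' - r \<le> dW \<epsilon> \<alpha> \<beta> D"
  proof (rule dW_ge[OF a b])
    fix Q assume Q: "Q \<in> couplings \<alpha> \<beta>"
    show "dW \<epsilon> \<alpha> \<beta> D' - r \<le> ent_obj \<epsilon> D Q"
      using dW_le[OF e Q, of D'] ent_obj_diff[OF Q a r', of \<epsilon>] by linarith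
  qed
  show ?thesis using 1 2 by linarith
qed



lemma entry_le_norm: "\<bar>D$i$j\<bar> \<le> norm (D :: real^'b^'a)"
proof -
  have "\<bar>D$i$j\<bar> \<le> norm (D$i)" by (rule component_le_norm_cart)
  also have "norm (D$i) \<le> norm D" by (rule Finite_Cartesian_Product.norm_nth_le)
  finally show ?thesis .
qed

lemma norm_le_entries:
  fixes D :: "real^'b^'a"
  assumes "\<forall>i j. \<bar>D$i$j\<bar> \<le> r"
  shows "norm D \<le> real CARD('a) * real CARD('b) * r"
proof -
  have "norm D \<le> (\<Sum>i\<in>UNIV. norm (D$i))"
    unfolding norm_vec_def by (rule L2_set_le_sum) simp
  also have "\<dots> \<le> (\<Sum>i\<in>(UNIV::'a set). real CARD('b) * r)"
  proof (rule sum_mono)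
    fix i
    have "norm (D$i) \<le> (\<Sum>j\<in>UNIV. \<bar>D$i$j\<bar>)" by (rule norm_le_l1_cart)
    also have "\<dots> \<le> (\<Sum>j\<in>(UNIV::'b set). r)" using assms by (intro sum_mono) auto
    finally show "norm (D$i) \<le> real CARD('b) * r" by simp
  qed
  finally show ?thesis by simp
qed

definition Tmap :: "real \<Rightarrow> real \<Rightarrow> real^'y^'x \<Rightarrow> real^'x^'x \<Rightarrow> real^'y^'y \<Rightarrow> real^'y^'x \<Rightarrow> real^'y^'x" where
  "Tmap \<delta> \<epsilon> C mX mY D = (\<chi> i j. \<delta> * C$i$j + (1 - \<delta>) * dW \<epsilon> (mX$i) (mY$j) D)"

lemma Tmap_contr:
  assumes e: "0 < \<epsilon>" and d: "\<delta> \<le> 1" and X: "row_stochastic mX" and Y: "row_stochastic mY"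
    and r: "\<forall>k l. \<bar>D$k$l - D'$k$l\<bar> \<le> r"
  shows "\<forall>i j. \<bar>Tmap \<delta> \<epsilon> C mX mY D $i$j - Tmap \<delta> \<epsilon> C mX mY D' $i$j\<bar> \<le> (1 - \<delta>) * r"
proof (intro allI)
  fix i j
  have "\<bar>dW \<epsilon> (mX$i) (mY$j) D - dW \<epsilon> (mX$i) (mY$j) D'\<bar> \<le> r"
    by (rule dW_lip[OF e row_stochastic_pv[OF X] row_stochastic_pv[OF Y] r])
  then have "\<bar>(1 - \<delta>) * (dW \<epsilon> (mX$i) (mY$j) D - dW \<epsilon> (mX$i) (mY$j) D')\<bar> \<le> (1 - \<delta>) * r"
    using d by (simp add: abs_mult mult_left_mono)
  then show "\<bar>Tmap \<delta> \<epsilon> C mX mY D $i$j - Tmap \<delta> \<epsilon> C mX mY D' $i$j\<bar> \<le> (1 - \<delta>) * r"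
    unfolding Tmap_def by (simp add: algebra_simps)
qed

lemma Tmap_iter_contr:
  assumes e: "0 < \<epsilon>" and d: "\<delta> \<le> 1" and X: "row_stochastic mX" and Y: "row_stochastic mY"
    and r: "\<forall>k l. \<bar>D$k$l - D'$k$l\<bar> \<le> r"
  shows "\<forall>i j. \<bar>(Tmap \<delta> \<epsilon> C mX mY ^^ n) D $i$j - (Tmap \<delta> \<epsilon> C mX mY ^^ n) D' $i$j\<bar> \<le> (1 - \<delta>)^n * r"
proof (induction n)
  case 0
  then show ?case using r by simp
next
  case (Suc n)
  show ?case
    using Tmap_contr[OF e d X Y Suc.IH, of C] by (simp add: mult.assoc)
qed

lemma fixed_exists_unique:
  fixes C :: "real^'y^'x" and mX :: "real^'x^'x" and mY :: "real^'y^'y"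
  assumes e: "0 < \<epsilon>" and d0: "0 < \<delta>" and d: "\<delta> \<le> 1" and X: "row_stochastic mX" and Y: "row_stochastic mY"
  shows "\<exists>!D. is_fixed_cost \<delta> \<epsilon> C mX mY D"
proof -
  let ?T = "Tmap \<delta> \<epsilon> C mX mY"
  define K where "K = real CARD('x) * real CARD('y)"
  have "0 < CARD('x)" "0 < CARD('y)" by (simp_all add: card_gt_0_iff)
  then have K: "K > 0" unfolding K_def by simp
  obtain N where N: "(1 - \<delta>)^N < 1 / K" using real_arch_pow_inv[of "1/K" "1 - \<delta>"] K d0 by auto
  define c where "c = K * (1 - \<delta>)^N"
  have c0: "0 \<le> c" unfolding c_def using K d by simp
  have c1: "c < 1" unfolding c_def using N K by (simp add: field_simps)
  have "\<forall>D D'. dist ((?T ^^ N) D) ((?T ^^ N) D') \<le> c * dist D D'"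
  proof (intro allI)
    fix D D' :: "real^'y^'x"
    have "\<forall>k l. \<bar>D$k$l - D'$k$l\<bar> \<le> dist D D'"
      using entry_le_norm[of "D - D'"] by (simp add: dist_norm)
    from Tmap_iter_contr[OF e d X Y this, where C=C and n=N]
    have "norm ((?T ^^ N) D - (?T ^^ N) D') \<le> K * ((1 - \<delta>)^N * dist D D')"
      unfolding K_def by (intro norm_le_entries) simp
    then show "dist ((?T ^^ N) D) ((?T ^^ N) D') \<le> c * dist D D'"
      by (simp add: dist_norm c_def mult.assoc)
  qed
  from banach_fix_type[OF c0 c1 this] obtain D where D: "(?T ^^ N) D = D"
    and uniq: "\<And>D'. (?T ^^ N) D' = D' \<Longrightarrow> D' = D" by blast
  have "(?T ^^ N) (?T D) = ?T D" using D by (metis funpow_swap1)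
  then have TD: "?T D = D" using uniq by blast
  have fix_iff: "is_fixed_cost \<delta> \<epsilon> C mX mY D' \<longleftrightarrow> ?T D' = D'" for D'
    unfolding is_fixed_cost_def Tmap_def vec_eq_iff by (auto simp: eq_commute)
  have fixN: "?T D' = D' \<Longrightarrow> (?T ^^ n) D' = D'" for D' n
    by (induction n) auto
  show ?thesis
  proof (rule ex1I[of _ D])
    show "is_fixed_cost \<delta> \<epsilon> C mX mY D" using fix_iff TD by simp
    fix D' assume "is_fixed_cost \<delta> \<epsilon> C mX mY D'"
    then show "D' = D" using fix_iff fixN uniq by blast
  qed
qed

lemma Cinf_fixed:
  assumes e: "0 < \<epsilon>" and d0: "0 < \<delta>" and d: "\<delta> \<le> 1" and X: "row_stochastic mX" and Y: "row_stochastic mY"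
  shows "is_fixed_cost \<delta> \<epsilon> C mX mY (Cinf \<delta> \<epsilon> C mX mY)"
  unfolding Cinf_def by (rule theI'[OF fixed_exists_unique[OF assms]])



lemma exp_quad_bound:
  fixes u :: real
  assumes "\<bar>u\<bar> \<le> 1"
  shows "exp u \<le> 1 + u + 3 * u^2"
proof -
  have "norm (exp u - (\<Sum>i\<le>1. u ^ i / fact i)) \<le> exp (norm u) * (norm u ^ Suc 1) / fact 1"
    by (rule Taylor_exp_field)
  then have 1: "\<bar>exp u - (1 + u)\<bar> \<le> exp \<bar>u\<bar> * u^2"
    by (simp add: numeral_2_eq_2)
  have "exp \<bar>u\<bar> \<le> exp 1" using assms by simp
  also have "\<dots> \<le> 3" using e_less_272 by simp
  finally have "exp \<bar>u\<bar> * u^2 \<le> 3 * u^2" by (intro mult_right_mono) auto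
  then show ?thesis using 1 by (simp add: abs_le_iff)
qed

lemma dW_base:
  assumes e: "0 < \<epsilon>" and a: "pv \<alpha>" and b: "pv \<beta>"
    and dopt: "is_dual_opt \<epsilon> \<alpha> \<beta> D f g" and popt: "is_opt_plan \<epsilon> \<alpha> \<beta> D P"
  shows "dW \<epsilon> \<alpha> \<beta> D = dv \<epsilon> \<alpha> \<beta> D f g" and "dW \<epsilon> \<alpha> \<beta> D = ent_obj \<epsilon> D P"
proof -
  have Pc: "P \<in> couplings \<alpha> \<beta>" using popt unfolding is_opt_plan_def by simp
  have 1: "dW \<epsilon> \<alpha> \<beta> D = ent_obj \<epsilon> D P"
  proof (rule antisym)
    show "dW \<epsilon> \<alpha> \<beta> D \<le> ent_obj \<epsilon> D P" by (rule dW_le[OF e Pc])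
    show "ent_obj \<epsilon> D P \<le> dW \<epsilon> \<alpha> \<beta> D"
      by (rule dW_ge[OF a b]) (use popt in \<open>auto simp: is_opt_plan_def\<close>)
  qed
  then show "dW \<epsilon> \<alpha> \<beta> D = ent_obj \<epsilon> D P" .
  have "ent_obj \<epsilon> D P = dv \<epsilon> \<alpha> \<beta> D f g"
    using ent_obj_eq_lagrangian[OF Pc, of \<epsilon> D f g] lagrangian_Qf[OF e, of \<alpha> \<beta> D f g]
      opt_plan_eq_Qf[OF e dopt popt] by simp
  then show "dW \<epsilon> \<alpha> \<beta> D = dv \<epsilon> \<alpha> \<beta> D f g" using 1 by simp
qed

lemma weak_dual:
  assumes e: "0 < \<epsilon>" and a: "pv \<alpha>" and b: "pv \<beta>"
  shows "dv \<epsilon> \<alpha> \<beta> D f g \<le> dW \<epsilon> \<alpha> \<beta> D"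
proof (rule dW_ge[OF a b])
  fix Q assume Q: "Q \<in> couplings \<alpha> \<beta>"
  have "\<forall>k l. 0 \<le> Q$k$l" using coupling_nonneg[OF Q] by blast
  then show "dv \<epsilon> \<alpha> \<beta> D f g \<le> ent_obj \<epsilon> D Q"
    using lagrangian_lower[OF e, of Q \<alpha> \<beta> D f g] ent_obj_eq_lagrangian[OF Q, of \<epsilon> D f g] by simp
qed

lemma lower_exp:
  assumes e: "0 < \<epsilon>" and a: "pv \<alpha>" and b: "pv \<beta>"
    and dopt: "is_dual_opt \<epsilon> \<alpha> \<beta> D f g" and popt: "is_opt_plan \<epsilon> \<alpha> \<beta> D P"
    and a': "pv \<alpha>'" and b': "pv \<beta>'" and r0: "0 \<le> r" and re: "r \<le> \<epsilon>"
    and rD: "\<forall>k l. \<bar>D'$k$l - D$k$l\<bar> \<le> r"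
  shows "dW \<epsilon> \<alpha> \<beta> D + (\<Sum>k\<in>UNIV. f$k * (\<alpha>'$k - \<alpha>$k)) + (\<Sum>l\<in>UNIV. g$l * (\<beta>'$l - \<beta>$l))
      + (\<Sum>k\<in>UNIV. \<Sum>l\<in>UNIV. P$k$l * (D'$k$l - D$k$l)) - 3 * r^2 / \<epsilon> \<le> dW \<epsilon> \<alpha>' \<beta>' D'"
proof -
  have PQ: "P = Qf \<epsilon> D f g" by (rule opt_plan_eq_Qf[OF e dopt popt])
  have Pc: "P \<in> couplings \<alpha> \<beta>" using popt unfolding is_opt_plan_def by simp
  have Pkl: "P$k$l = exp ((f$k + g$l - D$k$l) / \<epsilon> - 1)" for k l
    using PQ by (simp add: Qf_def)
  have P0: "0 \<le> P$k$l" for k l using coupling_nonneg[OF Pc] .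
  have mass: "(\<Sum>k\<in>UNIV. \<Sum>l\<in>UNIV. P$k$l) = 1" by (rule coupling_mass[OF Pc a])
  have ent: "\<epsilon> * exp ((f$k + g$l - D'$k$l) / \<epsilon> - 1) \<le> \<epsilon> * P$k$l - P$k$l * (D'$k$l - D$k$l) + (3 / \<epsilon>) * r^2 * P$k$l" for k l
  proof -
    define u where "u = - (D'$k$l - D$k$l) / \<epsilon>"
    have ur: "\<bar>u\<bar> \<le> r / \<epsilon>" using rD e unfolding u_def by (simp add: abs_minus_commute divide_right_mono)
    have u1: "\<bar>u\<bar> \<le> 1" using ur re e by (smt (verit) divide_le_eq_1_pos)
    have "exp ((f$k + g$l - D'$k$l) / \<epsilon> - 1) = P$k$l * exp u"
      unfolding Pkl u_def exp_add[symmetric] using e by (simp add: field_simps)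
    also have "\<dots> \<le> P$k$l * (1 + u + 3 * u^2)" by (intro mult_left_mono exp_quad_bound u1 P0)
    finally have 1: "\<epsilon> * exp ((f$k + g$l - D'$k$l) / \<epsilon> - 1) \<le> \<epsilon> * (P$k$l * (1 + u + 3 * u^2))"
      using e by simp
    have "u^2 \<le> (r/\<epsilon>)^2" using ur by (metis abs_ge_zero power2_abs power_mono)
    then have "\<epsilon> * (P$k$l * (3 * u^2)) \<le> \<epsilon> * (P$k$l * (3 * (r/\<epsilon>)^2))"
      using e P0 by (intro mult_left_mono) auto
    also have "\<epsilon> * (P$k$l * (3 * (r/\<epsilon>)^2)) = (3 / \<epsilon>) * r^2 * P$k$l"
      using e by (simp add: power2_eq_square field_simps)
    finally have 2: "\<epsilon> * (P$k$l * (3 * u^2)) \<le> (3 / \<epsilon>) * r^2 * P$k$l" .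
    have 3: "\<epsilon> * (P$k$l * (1 + u + 3 * u^2)) = \<epsilon> * P$k$l - P$k$l * (D'$k$l - D$k$l) + \<epsilon> * (P$k$l * (3 * u^2))"
      unfolding u_def using e by (simp add: field_simps)
    show ?thesis using 1 2 3 by linarith
  qed
  have sumexp: "\<epsilon> * (\<Sum>k\<in>UNIV. \<Sum>l\<in>UNIV. exp ((f$k + g$l - D'$k$l) / \<epsilon> - 1)) \<le>
      \<epsilon> * (\<Sum>k\<in>UNIV. \<Sum>l\<in>UNIV. P$k$l) - (\<Sum>k\<in>UNIV. \<Sum>l\<in>UNIV. P$k$l * (D'$k$l - D$k$l)) + (3 / \<epsilon>) * r^2 * (\<Sum>k\<in>UNIV. \<Sum>l\<in>UNIV. P$k$l)"
  proof -
    have "(\<Sum>k\<in>UNIV. \<Sum>l\<in>UNIV. \<epsilon> * exp ((f$k + g$l - D'$k$l) / \<epsilon> - 1)) \<le>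
       (\<Sum>k\<in>UNIV. \<Sum>l\<in>UNIV. \<epsilon> * P$k$l - P$k$l * (D'$k$l - D$k$l) + (3 / \<epsilon>) * r^2 * P$k$l)"
      by (intro sum_mono ent)
    then show ?thesis by (simp add: sum_distrib_left sum.distrib sum_subtractf)
  qed
  have dvb: "dv \<epsilon> \<alpha> \<beta> D f g = (\<Sum>k\<in>UNIV. f$k * \<alpha>$k) + (\<Sum>l\<in>UNIV. g$l * \<beta>$l) - \<epsilon> * (\<Sum>k\<in>UNIV. \<Sum>l\<in>UNIV. P$k$l)"
    unfolding dv_def Pkl by simp
  have lin: "(\<Sum>k\<in>UNIV. f$k * \<alpha>'$k) = (\<Sum>k\<in>UNIV. f$k * \<alpha>$k) + (\<Sum>k\<in>UNIV. f$k * (\<alpha>'$k - \<alpha>$k))"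
    "(\<Sum>l\<in>UNIV. g$l * \<beta>'$l) = (\<Sum>l\<in>UNIV. g$l * \<beta>$l) + (\<Sum>l\<in>UNIV. g$l * (\<beta>'$l - \<beta>$l))"
    by (simp_all add: right_diff_distrib sum_subtractf)
  have "dW \<epsilon> \<alpha> \<beta> D + (\<Sum>k\<in>UNIV. f$k * (\<alpha>'$k - \<alpha>$k)) + (\<Sum>l\<in>UNIV. g$l * (\<beta>'$l - \<beta>$l))
      + (\<Sum>k\<in>UNIV. \<Sum>l\<in>UNIV. P$k$l * (D'$k$l - D$k$l)) - 3 * r^2 / \<epsilon> \<le> dv \<epsilon> \<alpha>' \<beta>' D' f g"
    unfolding dW_base(1)[OF e a b dopt popt] dvb
    unfolding dv_def lin using sumexp mass by simp
  also have "\<dots> \<le> dW \<epsilon> \<alpha>' \<beta>' D'" by (rule weak_dual[OF e a' b'])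
  finally show ?thesis .
qed

lemma upper_exp:
  fixes \<alpha> \<alpha>' :: "real^'x" and \<beta> \<beta>' :: "real^'y"
  assumes e: "0 < \<epsilon>" and a: "pv \<alpha>" and b: "pv \<beta>"
    and dopt: "is_dual_opt \<epsilon> \<alpha> \<beta> D f g" and popt: "is_opt_plan \<epsilon> \<alpha> \<beta> D P"
    and a': "pv \<alpha>'" and b': "pv \<beta>'" and r0: "0 \<le> r"
    and rP: "\<forall>k l. 2 * r \<le> P$k$l"
    and rD: "\<forall>k l. \<bar>D'$k$l - D$k$l\<bar> \<le> r"
    and ra: "\<forall>k. \<bar>\<alpha>'$k - \<alpha>$k\<bar> \<le> r" and rb: "\<forall>l. \<bar>\<beta>'$l - \<beta>$l\<bar> \<le> r"
  shows "dW \<epsilon> \<alpha>' \<beta>' D' \<le> dW \<epsilon> \<alpha> \<beta> D + (\<Sum>k\<in>UNIV. f$k * (\<alpha>'$k - \<alpha>$k)) + (\<Sum>l\<in>UNIV. g$l * (\<beta>'$l - \<beta>$l))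
      + (\<Sum>k\<in>UNIV. \<Sum>l\<in>UNIV. P$k$l * (D'$k$l - D$k$l))
      + (2 * real CARD('x) * real CARD('y) + 4 * \<epsilon> * (\<Sum>k\<in>UNIV. \<Sum>l\<in>UNIV. 1 / P$k$l)) * r^2"
proof -
  have PQ: "P = Qf \<epsilon> D f g" by (rule opt_plan_eq_Qf[OF e dopt popt])
  have Pc: "P \<in> couplings \<alpha> \<beta>" using popt unfolding is_opt_plan_def by simp
  have Pkl: "P$k$l = exp ((f$k + g$l - D$k$l) / \<epsilon> - 1)" for k l
    using PQ by (simp add: Qf_def)
  have Ppos: "0 < P$k$l" for k l using Pkl by simp
  have lnP: "\<epsilon> * (ln (P$k$l) + 1) = f$k + g$l - D$k$l" for k l
    unfolding Pkl using e by (simp add: field_simps)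
  define E where "E = (\<chi> k l. (\<alpha>'$k - \<alpha>$k) * \<beta>$l + \<alpha>$k * (\<beta>'$l - \<beta>$l))"
  have Ekl: "E$k$l = (\<alpha>'$k - \<alpha>$k) * \<beta>$l + \<alpha>$k * (\<beta>'$l - \<beta>$l)" for k l
    unfolding E_def by simp
  have Eb: "\<bar>E$k$l\<bar> \<le> 2 * r" for k l
  proof -
    have "\<bar>(\<alpha>'$k - \<alpha>$k) * \<beta>$l\<bar> \<le> r * 1"
      unfolding abs_mult using ra pv_le1[OF b] b r0 unfolding pv_def by (intro mult_mono) auto
    moreover have "\<bar>\<alpha>$k * (\<beta>'$l - \<beta>$l)\<bar> \<le> 1 * r"
      unfolding abs_mult using rb pv_le1[OF a] a r0 unfolding pv_def by (intro mult_mono) auto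
    ultimately show ?thesis unfolding Ekl by linarith
  qed
  have sa: "(\<Sum>k\<in>UNIV. \<alpha>'$k - \<alpha>$k) = 0" using a a' unfolding pv_def by (simp add: sum_subtractf)
  have sb: "(\<Sum>l\<in>UNIV. \<beta>'$l - \<beta>$l) = 0" using b b' unfolding pv_def by (simp add: sum_subtractf)
  have sa1: "(\<Sum>k\<in>UNIV. \<alpha>$k) = 1" and sb1: "(\<Sum>l\<in>UNIV. \<beta>$l) = 1" using a b unfolding pv_def by auto
  have rowE: "(\<Sum>l\<in>UNIV. E$k$l) = \<alpha>'$k - \<alpha>$k" for k
    unfolding Ekl sum.distrib sum_distrib_left[symmetric] sb sb1 by simp
  have colE: "(\<Sum>k\<in>UNIV. E$k$l) = \<beta>'$l - \<beta>$l" for l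
    unfolding Ekl sum.distrib sum_distrib_right[symmetric] sa sa1 by simp
  define Q where "Q = P + E"
  have Qkl: "Q$k$l = P$k$l + E$k$l" for k l unfolding Q_def by simp
  have Q0: "0 \<le> Q$k$l" for k l
  proof -
    have "2 * r \<le> P$k$l" using rP by blast
    then show ?thesis using Eb[of k l] unfolding Qkl by (auto simp: abs_le_iff)
  qed
  have Qc: "Q \<in> couplings \<alpha>' \<beta>'"
    unfolding couplings_def mem_Collect_eq
  proof (intro conjI allI)
    show "0 \<le> Q$k$l" for k l by (rule Q0)
    show "(\<Sum>l\<in>UNIV. Q$k$l) = \<alpha>'$k" for k
      unfolding Qkl sum.distrib rowE using Pc unfolding couplings_def by simp
    show "(\<Sum>k\<in>UNIV. Q$k$l) = \<beta>'$l" for l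
      unfolding Qkl sum.distrib colE using Pc unfolding couplings_def by simp
  qed
  have entry: "Q$k$l * D'$k$l + \<epsilon> * xlogx (Q$k$l) \<le>
      (P$k$l * D$k$l + \<epsilon> * xlogx (P$k$l)) + P$k$l * (D'$k$l - D$k$l) + (f$k * E$k$l + g$l * E$k$l)
      + (2 * r^2 + 4 * \<epsilon> * (1 / P$k$l) * r^2)" for k l
  proof -
    have x: "xlogx (Q$k$l) \<le> xlogx (P$k$l) + (ln (P$k$l) + 1) * E$k$l + (E$k$l)^2 / P$k$l"
      using xlogx_upper[OF Q0 Ppos, of k l k l] unfolding Qkl by simp
    have "\<epsilon> * xlogx (Q$k$l) \<le> \<epsilon> * (xlogx (P$k$l) + (ln (P$k$l) + 1) * E$k$l + (E$k$l)^2 / P$k$l)"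
      using x e by (intro mult_left_mono) auto
    also have "\<dots> = \<epsilon> * xlogx (P$k$l) + (f$k + g$l - D$k$l) * E$k$l + \<epsilon> * ((E$k$l)^2 / P$k$l)"
    proof -
      have "\<epsilon> * ((ln (P$k$l) + 1) * E$k$l) = (f$k + g$l - D$k$l) * E$k$l"
        using lnP[of k l] by (metis mult.assoc)
      then show ?thesis by (simp add: algebra_simps)
    qed
    finally have 1: "\<epsilon> * xlogx (Q$k$l) \<le> \<epsilon> * xlogx (P$k$l) + (f$k + g$l - D$k$l) * E$k$l + \<epsilon> * ((E$k$l)^2 / P$k$l)" .
    have "(E$k$l)^2 \<le> (2 * r)^2" using Eb[of k l] by (metis abs_ge_zero power2_abs power_mono)
    then have "(E$k$l)^2 / P$k$l \<le> (2 * r)^2 / P$k$l" using Ppos[of k l] by (intro divide_right_mono) auto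
    then have "\<epsilon> * ((E$k$l)^2 / P$k$l) \<le> \<epsilon> * ((2 * r)^2 / P$k$l)"
      using e by (intro mult_left_mono) auto
    also have "\<dots> = 4 * \<epsilon> * (1 / P$k$l) * r^2" by (simp add: power2_eq_square)
    finally have 2: "\<epsilon> * ((E$k$l)^2 / P$k$l) \<le> 4 * \<epsilon> * (1 / P$k$l) * r^2" .
    have "\<bar>E$k$l * (D'$k$l - D$k$l)\<bar> \<le> 2 * r * r"
      unfolding abs_mult using Eb[of k l] rD r0 by (intro mult_mono) auto
    then have 3: "E$k$l * (D'$k$l - D$k$l) \<le> 2 * r^2" by (simp add: power2_eq_square abs_le_iff)
    have 4: "Q$k$l * D'$k$l = P$k$l * D$k$l + P$k$l * (D'$k$l - D$k$l) + E$k$l * D$k$l + E$k$l * (D'$k$l - D$k$l)"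
      unfolding Qkl by (simp add: algebra_simps)
    show ?thesis using 1 2 3 4 by (simp add: algebra_simps)
  qed
  have "dW \<epsilon> \<alpha>' \<beta>' D' \<le> ent_obj \<epsilon> D' Q" by (rule dW_le[OF e Qc])
  also have "\<dots> = (\<Sum>k\<in>UNIV. \<Sum>l\<in>UNIV. Q$k$l * D'$k$l + \<epsilon> * xlogx (Q$k$l))"
    unfolding ent_obj_def by (simp add: sum.distrib sum_distrib_left)
  also have "\<dots> \<le> (\<Sum>k\<in>UNIV. \<Sum>l\<in>UNIV. (P$k$l * D$k$l + \<epsilon> * xlogx (P$k$l)) + P$k$l * (D'$k$l - D$k$l) + (f$k * E$k$l + g$l * E$k$l)
      + (2 * r^2 + 4 * \<epsilon> * (1 / P$k$l) * r^2))"
    by (intro sum_mono entry)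
  also have "\<dots> = ent_obj \<epsilon> D P + (\<Sum>k\<in>UNIV. \<Sum>l\<in>UNIV. P$k$l * (D'$k$l - D$k$l))
      + ((\<Sum>k\<in>UNIV. \<Sum>l\<in>UNIV. f$k * E$k$l) + (\<Sum>k\<in>UNIV. \<Sum>l\<in>UNIV. g$l * E$k$l))
      + (2 * real CARD('x) * real CARD('y) + 4 * \<epsilon> * (\<Sum>k\<in>UNIV. \<Sum>l\<in>UNIV. 1 / P$k$l)) * r^2"
    unfolding ent_obj_def by (simp add: sum.distrib sum_distrib_left sum_distrib_right sum_subtractf algebra_simps)
  also have "(\<Sum>k\<in>UNIV. \<Sum>l\<in>UNIV. f$k * E$k$l) = (\<Sum>k\<in>UNIV. f$k * (\<alpha>'$k - \<alpha>$k))"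
    by (simp add: sum_distrib_left[symmetric] rowE)
  also have "(\<Sum>k\<in>UNIV. \<Sum>l\<in>UNIV. g$l * E$k$l) = (\<Sum>l\<in>UNIV. g$l * (\<beta>'$l - \<beta>$l))"
    by (subst sum.swap) (simp add: sum_distrib_left[symmetric] colE)
  also have "ent_obj \<epsilon> D P = dW \<epsilon> \<alpha> \<beta> D" using dW_base(2)[OF e a b dopt popt] by simp
  finally show ?thesis by (simp add: algebra_simps)
qed



lemma sum_pair_UNIV: "(\<Sum>c\<in>(UNIV::('a::finite\<times>'b::finite) set). h c) = (\<Sum>k\<in>UNIV. \<Sum>l\<in>UNIV. h (k,l))"
  using sum.cartesian_product[of "\<lambda>k l. h (k,l)" UNIV UNIV] by simp

lemma mat_vec_comp: "(M *v v) $ r = (\<Sum>c\<in>UNIV. M$r$c * v$c)"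
  by (simp add: matrix_vector_mult_def)

lemma exists_max_abs:
  fixes v :: "real^'n"
  obtains r0 where "\<And>r. \<bar>v$r\<bar> \<le> \<bar>v$r0\<bar>"
proof -
  have "finite (range (\<lambda>r. \<bar>v$r\<bar>))" by simp
  moreover have "range (\<lambda>r. \<bar>v$r\<bar>) \<noteq> {}" by simp
  ultimately have "Max (range (\<lambda>r. \<bar>v$r\<bar>)) \<in> range (\<lambda>r. \<bar>v$r\<bar>)" by (rule Max_in)
  then obtain r0 where r0: "Max (range (\<lambda>r. \<bar>v$r\<bar>)) = \<bar>v$r0\<bar>" by (metis (no_types, lifting) rangeE)
  have "\<bar>v$r\<bar> \<le> \<bar>v$r0\<bar>" for r unfolding r0[symmetric] by (rule Max_ge) auto
  then show ?thesis using that by blast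
qed

lemma invertible_A:
  fixes Pm :: "real^'n^'n"
  assumes P0: "\<forall>r c. 0 \<le> Pm$r$c" and P1: "\<forall>r. (\<Sum>c\<in>UNIV. Pm$r$c) = 1"
    and d0: "0 < \<delta>" and d1: "\<delta> \<le> 1"
  shows "invertible (mat 1 - (1 - \<delta>) *\<^sub>R Pm)"
  unfolding invertible_left_inverse matrix_left_invertible_ker
proof (intro allI impI)
  fix v :: "real^'n"
  assume Av: "(mat 1 - (1 - \<delta>) *\<^sub>R Pm) *v v = 0"
  have vr: "v$r = (1 - \<delta>) * (\<Sum>c\<in>UNIV. Pm$r$c * v$c)" for r
  proof -
    have "((mat 1 - (1 - \<delta>) *\<^sub>R Pm) *v v) $ r = 0" using Av by simp
    then show ?thesis
      by (simp add: matrix_vector_mult_diff_rdistrib scaleR_matrix_vector_assoc[symmetric] mat_vec_comp[of Pm])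
  qed
  obtain r0 where r0: "\<And>r. \<bar>v$r\<bar> \<le> \<bar>v$r0\<bar>" using exists_max_abs[of v] by blast
  have "\<bar>(\<Sum>c\<in>UNIV. Pm$r0$c * v$c)\<bar> \<le> (\<Sum>c\<in>UNIV. Pm$r0$c * \<bar>v$r0\<bar>)"
  proof -
    have "\<bar>(\<Sum>c\<in>UNIV. Pm$r0$c * v$c)\<bar> \<le> (\<Sum>c\<in>UNIV. \<bar>Pm$r0$c * v$c\<bar>)" by (rule sum_abs)
    also have "\<dots> \<le> (\<Sum>c\<in>UNIV. Pm$r0$c * \<bar>v$r0\<bar>)"
      using P0 r0 by (intro sum_mono) (simp add: abs_mult mult_left_mono)
    finally show ?thesis .
  qed
  also have "\<dots> = \<bar>v$r0\<bar>" using P1 by (simp add: sum_distrib_right[symmetric])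
  finally have "\<bar>v$r0\<bar> \<le> (1 - \<delta>) * \<bar>v$r0\<bar>"
    using vr[of r0] d1 by (simp add: abs_mult mult_left_mono)
  then have "\<bar>v$r0\<bar> = 0" using d0 by (smt (verit) abs_ge_zero mult_le_cancel_right1)
  then show "v = 0" using r0 by (simp add: vec_eq_iff)
qed



definition lin :: "real^'y^'x \<Rightarrow> real^'x \<Rightarrow> real^'y \<Rightarrow> real^'x \<Rightarrow> real^'x \<Rightarrow> real^'y \<Rightarrow> real^'y \<Rightarrow> real^'y^'x \<Rightarrow> real^'y^'x \<Rightarrow> real" where
  "lin P f g \<alpha> \<alpha>' \<beta> \<beta>' D D' = (\<Sum>k\<in>UNIV. f$k * (\<alpha>'$k - \<alpha>$k)) + (\<Sum>l\<in>UNIV. g$l * (\<beta>'$l - \<beta>$l))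
      + (\<Sum>k\<in>UNIV. \<Sum>l\<in>UNIV. P$k$l * (D'$k$l - D$k$l))"

definition Kc :: "real \<Rightarrow> real^'y^'x \<Rightarrow> real" where
  "Kc \<epsilon> P = 3 / \<epsilon> + 2 * real CARD('x) * real CARD('y) + 4 * \<epsilon> * (\<Sum>k\<in>UNIV. \<Sum>l\<in>UNIV. 1 / P$k$l)"

lemma expansion:
  fixes \<alpha> \<alpha>' :: "real^'x" and \<beta> \<beta>' :: "real^'y"
  assumes e: "0 < \<epsilon>" and a: "pv \<alpha>" and b: "pv \<beta>"
    and dopt: "is_dual_opt \<epsilon> \<alpha> \<beta> D f g" and popt: "is_opt_plan \<epsilon> \<alpha> \<beta> D P"
    and a': "pv \<alpha>'" and b': "pv \<beta>'" and r0: "0 \<le> r" and re: "r \<le> \<epsilon>"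
    and rP: "\<forall>k l. 2 * r \<le> P$k$l"
    and rD: "\<forall>k l. \<bar>D'$k$l - D$k$l\<bar> \<le> r"
    and ra: "\<forall>k. \<bar>\<alpha>'$k - \<alpha>$k\<bar> \<le> r" and rb: "\<forall>l. \<bar>\<beta>'$l - \<beta>$l\<bar> \<le> r"
  shows "\<bar>dW \<epsilon> \<alpha>' \<beta>' D' - dW \<epsilon> \<alpha> \<beta> D - lin P f g \<alpha> \<alpha>' \<beta> \<beta>' D D'\<bar> \<le> Kc \<epsilon> P * r^2"
proof -
  have lo: "dW \<epsilon> \<alpha> \<beta> D + lin P f g \<alpha> \<alpha>' \<beta> \<beta>' D D' - 3 * r^2 / \<epsilon> \<le> dW \<epsilon> \<alpha>' \<beta>' D'"
    using lower_exp[OF e a b dopt popt a' b' r0 re rD] unfolding lin_def by simp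
  have up: "dW \<epsilon> \<alpha>' \<beta>' D' \<le> dW \<epsilon> \<alpha> \<beta> D + lin P f g \<alpha> \<alpha>' \<beta> \<beta>' D D'
      + (2 * real CARD('x) * real CARD('y) + 4 * \<epsilon> * (\<Sum>k\<in>UNIV. \<Sum>l\<in>UNIV. 1 / P$k$l)) * r^2"
    using upper_exp[OF e a b dopt popt a' b' r0 rP rD ra rb] unfolding lin_def by simp
  have Ppos: "0 < P$k$l" for k l
    using opt_plan_eq_Qf[OF e dopt popt] by (simp add: Qf_def)
  have "0 \<le> (\<Sum>k\<in>UNIV. \<Sum>l\<in>UNIV. 1 / P$k$l)"
    using Ppos by (intro sum_nonneg) (simp add: less_imp_le)
  then have "0 \<le> 4 * \<epsilon> * (\<Sum>k\<in>UNIV. \<Sum>l\<in>UNIV. 1 / P$k$l) * r^2" using e by simp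
  moreover have "0 \<le> 3 / \<epsilon> * r^2" using e by simp
  moreover have "0 \<le> 2 * real CARD('x) * real CARD('y) * r^2" by simp
  moreover have "Kc \<epsilon> P * r^2 = 3 / \<epsilon> * r^2 + 2 * real CARD('x) * real CARD('y) * r^2 + 4 * \<epsilon> * (\<Sum>k\<in>UNIV. \<Sum>l\<in>UNIV. 1 / P$k$l) * r^2"
    unfolding Kc_def by (simp add: algebra_simps)
  moreover have "3 * r^2 / \<epsilon> = 3 / \<epsilon> * r^2" by simp
  moreover have "(2 * real CARD('x) * real CARD('y) + 4 * \<epsilon> * (\<Sum>k\<in>UNIV. \<Sum>l\<in>UNIV. 1 / P$k$l)) * r^2
     = 2 * real CARD('x) * real CARD('y) * r^2 + 4 * \<epsilon> * (\<Sum>k\<in>UNIV. \<Sum>l\<in>UNIV. 1 / P$k$l) * r^2"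
    by (simp add: algebra_simps)
  ultimately show ?thesis using lo up unfolding abs_le_iff by linarith
qed



lemma lin_zero_bound:
  assumes s0: "0 \<le> s" and ra: "\<forall>k. \<bar>\<alpha>'$k - \<alpha>$k\<bar> \<le> s" and rb: "\<forall>l. \<bar>\<beta>'$l - \<beta>$l\<bar> \<le> s"
  shows "\<bar>lin P f g \<alpha> \<alpha>' \<beta> \<beta>' D D\<bar> \<le> ((\<Sum>k\<in>UNIV. \<bar>f$k\<bar>) + (\<Sum>l\<in>UNIV. \<bar>g$l\<bar>)) * s"
proof -
  have 1: "\<bar>\<Sum>k\<in>UNIV. f$k * (\<alpha>'$k - \<alpha>$k)\<bar> \<le> (\<Sum>k\<in>UNIV. \<bar>f$k\<bar>) * s"
  proof -
    have "\<bar>\<Sum>k\<in>UNIV. f$k * (\<alpha>'$k - \<alpha>$k)\<bar> \<le> (\<Sum>k\<in>UNIV. \<bar>f$k * (\<alpha>'$k - \<alpha>$k)\<bar>)" by (rule sum_abs)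
    also have "\<dots> \<le> (\<Sum>k\<in>UNIV. \<bar>f$k\<bar> * s)" using ra by (intro sum_mono) (simp add: abs_mult mult_left_mono)
    finally show ?thesis by (simp add: sum_distrib_right)
  qed
  have 2: "\<bar>\<Sum>l\<in>UNIV. g$l * (\<beta>'$l - \<beta>$l)\<bar> \<le> (\<Sum>l\<in>UNIV. \<bar>g$l\<bar>) * s"
  proof -
    have "\<bar>\<Sum>l\<in>UNIV. g$l * (\<beta>'$l - \<beta>$l)\<bar> \<le> (\<Sum>l\<in>UNIV. \<bar>g$l * (\<beta>'$l - \<beta>$l)\<bar>)" by (rule sum_abs)
    also have "\<dots> \<le> (\<Sum>l\<in>UNIV. \<bar>g$l\<bar> * s)" using rb by (intro sum_mono) (simp add: abs_mult mult_left_mono)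
    finally show ?thesis by (simp add: sum_distrib_right)
  qed
  show ?thesis using 1 2 unfolding lin_def by (simp add: distrib_right abs_le_iff)
qed

lemma le_double_sum:
  fixes h :: "'a::finite \<Rightarrow> 'b::finite \<Rightarrow> real"
  assumes "\<forall>i j. 0 \<le> h i j"
  shows "h i j \<le> (\<Sum>i\<in>UNIV. \<Sum>j\<in>UNIV. h i j)"
proof -
  have "h i j \<le> (\<Sum>j\<in>UNIV. h i j)" using assms by (intro member_le_sum) auto
  also have "\<dots> \<le> (\<Sum>i\<in>UNIV. \<Sum>j\<in>UNIV. h i j)" using assms by (intro member_le_sum sum_nonneg) auto
  finally show ?thesis .
qed

lemma fp_expansion:
  fixes C :: "real^'y^'x" and mX :: "real^'x^'x" and mY :: "real^'y^'y"
    and \<delta> \<epsilon> :: real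
    and P :: "'x \<Rightarrow> 'y \<Rightarrow> real^'y^'x"
    and f :: "'x \<Rightarrow> 'y \<Rightarrow> real^'x" and g :: "'x \<Rightarrow> 'y \<Rightarrow> real^'y"
  assumes X: "row_stochastic mX" and Y: "row_stochastic mY"
    and d0: "0 < \<delta>" and d1: "\<delta> \<le> 1" and e: "0 < \<epsilon>"
    and popt: "\<forall>i j. is_opt_plan \<epsilon> (mX$i) (mY$j) (Cinf \<delta> \<epsilon> C mX mY) (P i j)"
    and dopt: "\<forall>i j. is_dual_opt \<epsilon> (mX$i) (mY$j) (Cinf \<delta> \<epsilon> C mX mY) (f i j) (g i j)"
  shows "\<exists>K \<rho>. 0 < \<rho> \<and> 0 \<le> K \<and> (\<forall>C' mX' mY' s. row_stochastic mX' \<and> row_stochastic mY' \<and> 0 \<le> s \<and> s \<le> \<rho>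
      \<and> (\<forall>i j. \<bar>C'$i$j - C$i$j\<bar> \<le> s) \<and> (\<forall>i j. \<bar>mX'$i$j - mX$i$j\<bar> \<le> s) \<and> (\<forall>i j. \<bar>mY'$i$j - mY$i$j\<bar> \<le> s)
      \<longrightarrow> (\<forall>i j. \<bar>Cinf \<delta> \<epsilon> C' mX' mY' $i$j - Cinf \<delta> \<epsilon> C mX mY $i$j - \<delta> * (C'$i$j - C$i$j)
             - (1 - \<delta>) * lin (P i j) (f i j) (g i j) (mX$i) (mX'$i) (mY$j) (mY'$j) (Cinf \<delta> \<epsilon> C mX mY) (Cinf \<delta> \<epsilon> C' mX' mY')\<bar> \<le> K * s^2))"
proof -
  define D0 where "D0 = Cinf \<delta> \<epsilon> C mX mY"
  have D0fix: "is_fixed_cost \<delta> \<epsilon> C mX mY D0" unfolding D0_def by (rule Cinf_fixed[OF e d0 d1 X Y])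
  have pX: "pv (mX$i)" for i by (rule row_stochastic_pv[OF X])
  have pY: "pv (mY$j)" for j by (rule row_stochastic_pv[OF Y])
  have po: "is_opt_plan \<epsilon> (mX$i) (mY$j) D0 (P i j)" for i j using popt unfolding D0_def by blast
  have do: "is_dual_opt \<epsilon> (mX$i) (mY$j) D0 (f i j) (g i j)" for i j using dopt unfolding D0_def by blast
  have Ppos: "0 < P i j $k$l" for i j k l
    using opt_plan_eq_Qf[OF e do po] by (simp add: Qf_def)
  define pm where "pm = Min ((\<lambda>(i,j,k,l). P i j $k$l) ` (UNIV :: ('x \<times> 'y \<times> 'x \<times> 'y) set))"
  have pm_le: "pm \<le> P i j $k$l" for i j k l
  proof -
    have "(\<lambda>(i,j,k,l). P i j $k$l) (i,j,k,l) \<in> (\<lambda>(i,j,k,l). P i j $k$l) ` (UNIV :: ('x \<times> 'y \<times> 'x \<times> 'y) set)"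
      by (rule imageI) simp
    then show ?thesis unfolding pm_def by (intro Min_le) auto
  qed
  have pm_pos: "0 < pm"
  proof -
    have "pm \<in> (\<lambda>(i,j,k,l). P i j $k$l) ` (UNIV :: ('x \<times> 'y \<times> 'x \<times> 'y) set)"
      unfolding pm_def by (intro Min_in) auto
    then show ?thesis using Ppos by auto
  qed
  define Kall where "Kall = (\<Sum>i\<in>UNIV. \<Sum>j\<in>UNIV. Kc \<epsilon> (P i j))"
  have Kc0: "0 \<le> Kc \<epsilon> (P i j)" for i j
  proof -
    have "0 \<le> (\<Sum>k\<in>UNIV. \<Sum>l\<in>UNIV. 1 / P i j $k$l)"
      using Ppos by (intro sum_nonneg) (simp add: less_imp_le)
    then show ?thesis unfolding Kc_def using e by simp
  qed
  have KcK: "Kc \<epsilon> (P i j) \<le> Kall" for i j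
    unfolding Kall_def by (rule le_double_sum) (use Kc0 in auto)
  have Kall0: "0 \<le> Kall" using KcK[of undefined undefined] Kc0[of undefined undefined] by linarith
  define \<rho>0 where "\<rho>0 = min \<epsilon> (pm / 2)"
  have \<rho>0pos: "0 < \<rho>0" unfolding \<rho>0_def using e pm_pos by simp
  have UE: "\<bar>dW \<epsilon> \<alpha>' \<beta>' D' - dW \<epsilon> (mX$i) (mY$j) D0 - lin (P i j) (f i j) (g i j) (mX$i) \<alpha>' (mY$j) \<beta>' D0 D'\<bar> \<le> Kall * r^2"
    if "pv \<alpha>'" "pv \<beta>'" "0 \<le> r" "r \<le> \<rho>0" "\<forall>k l. \<bar>D'$k$l - D0$k$l\<bar> \<le> r"
       "\<forall>k. \<bar>\<alpha>'$k - mX$i$k\<bar> \<le> r" "\<forall>l. \<bar>\<beta>'$l - mY$j$l\<bar> \<le> r" for i j \<alpha>' \<beta>' D' r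
  proof -
    have "r \<le> \<epsilon>" using that(4) unfolding \<rho>0_def by simp
    moreover have "\<forall>k l. 2 * r \<le> P i j $k$l" using that(4) pm_le unfolding \<rho>0_def by (smt (verit) field_sum_of_halves)
    ultimately have "\<bar>dW \<epsilon> \<alpha>' \<beta>' D' - dW \<epsilon> (mX$i) (mY$j) D0 - lin (P i j) (f i j) (g i j) (mX$i) \<alpha>' (mY$j) \<beta>' D0 D'\<bar> \<le> Kc \<epsilon> (P i j) * r^2"
      by (intro expansion[OF e pX pY do po that(1,2,3)] that)
    also have "\<dots> \<le> Kall * r^2" using KcK by (intro mult_right_mono) auto
    finally show ?thesis .
  qed
  define Fb where "Fb = (\<Sum>i\<in>UNIV. \<Sum>j\<in>UNIV. (\<Sum>k\<in>UNIV. \<bar>f i j $k\<bar>) + (\<Sum>l\<in>UNIV. \<bar>g i j $l\<bar>))"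
  have Fb: "(\<Sum>k\<in>UNIV. \<bar>f i j $k\<bar>) + (\<Sum>l\<in>UNIV. \<bar>g i j $l\<bar>) \<le> Fb" for i j
    unfolding Fb_def by (rule le_double_sum) (auto intro: add_nonneg_nonneg sum_nonneg)
  have Fb0: "0 \<le> Fb" using Fb[of undefined undefined] by (smt (verit) abs_ge_zero sum_nonneg)
  define L1 where "L1 = Fb + Kall * \<rho>0"
  have L10: "0 \<le> L1" unfolding L1_def using Fb0 Kall0 \<rho>0pos by simp
  define L2 where "L2 = 1 + L1 / \<delta>"
  have L21: "1 \<le> L2" unfolding L2_def using L10 d0 by simp
  define \<rho> where "\<rho> = \<rho>0 / L2"
  have \<rho>pos: "0 < \<rho>" unfolding \<rho>_def using \<rho>0pos L21 by simp
  show ?thesis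
  proof (intro exI conjI allI impI)
    show "0 < \<rho>" by (rule \<rho>pos)
    show "0 \<le> Kall * L2^2" using Kall0 by simp
    fix C' :: "real^'y^'x" and mX' :: "real^'x^'x" and mY' :: "real^'y^'y" and s :: real and i j
    assume H: "row_stochastic mX' \<and> row_stochastic mY' \<and> 0 \<le> s \<and> s \<le> \<rho>
      \<and> (\<forall>i j. \<bar>C'$i$j - C$i$j\<bar> \<le> s) \<and> (\<forall>i j. \<bar>mX'$i$j - mX$i$j\<bar> \<le> s) \<and> (\<forall>i j. \<bar>mY'$i$j - mY$i$j\<bar> \<le> s)"
    then have X': "row_stochastic mX'" and Y': "row_stochastic mY'" and s0: "0 \<le> s" and s\<rho>: "s \<le> \<rho>"
      and sC: "\<forall>i j. \<bar>C'$i$j - C$i$j\<bar> \<le> s" and sX: "\<forall>i j. \<bar>mX'$i$j - mX$i$j\<bar> \<le> s"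
      and sY: "\<forall>i j. \<bar>mY'$i$j - mY$i$j\<bar> \<le> s" by auto
    have "\<rho>0 / L2 \<le> \<rho>0 / 1" by (rule divide_left_mono) (use L21 \<rho>0pos in auto)
    then have s\<rho>0: "s \<le> \<rho>0" using s\<rho> unfolding \<rho>_def by simp
    have "L2 * s \<le> L2 * \<rho>" using s\<rho> L21 by (intro mult_left_mono) auto
    also have "L2 * \<rho> = \<rho>0" using L21 unfolding \<rho>_def by simp
    finally have L2s: "L2 * s \<le> \<rho>0" .
    define D1 where "D1 = Cinf \<delta> \<epsilon> C' mX' mY'"
    have D1fix: "is_fixed_cost \<delta> \<epsilon> C' mX' mY' D1" unfolding D1_def by (rule Cinf_fixed[OF e d0 d1 X' Y'])
    have pX': "pv (mX'$i)" for i by (rule row_stochastic_pv[OF X'])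
    have pY': "pv (mY'$j)" for j by (rule row_stochastic_pv[OF Y'])
    have eq0: "D1$i$j - D0$i$j = \<delta> * (C'$i$j - C$i$j) + (1 - \<delta>) * (dW \<epsilon> (mX'$i) (mY'$j) D1 - dW \<epsilon> (mX$i) (mY$j) D0)" for i j
      using D1fix D0fix unfolding is_fixed_cost_def by (simp add: algebra_simps)
    obtain q0 where q0: "\<And>q. \<bar>(\<chi> q. (D1 - D0)$fst q$snd q)$q\<bar> \<le> \<bar>(\<chi> q. (D1 - D0)$fst q$snd q)$q0\<bar>"
      using exists_max_abs[of "(\<chi> q. (D1 - D0)$fst q$snd q) :: real^('x\<times>'y)"] by blast
    define M where "M = \<bar>D1$fst q0$snd q0 - D0$fst q0$snd q0\<bar>"
    have M: "\<forall>k l. \<bar>D1$k$l - D0$k$l\<bar> \<le> M"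
    proof (intro allI)
      fix k l
      show "\<bar>D1$k$l - D0$k$l\<bar> \<le> M" using q0[of "(k,l)"] unfolding M_def by simp
    qed
    have M0: "0 \<le> M" unfolding M_def by simp
    have step: "\<bar>D1$i$j - D0$i$j\<bar> \<le> \<delta> * s + (1 - \<delta>) * (M + L1 * s)" for i j
    proof -
      have a1: "\<bar>dW \<epsilon> (mX'$i) (mY'$j) D1 - dW \<epsilon> (mX'$i) (mY'$j) D0\<bar> \<le> M"
        by (rule dW_lip[OF e pX' pY' M])
      have "\<bar>dW \<epsilon> (mX'$i) (mY'$j) D0 - dW \<epsilon> (mX$i) (mY$j) D0 - lin (P i j) (f i j) (g i j) (mX$i) (mX'$i) (mY$j) (mY'$j) D0 D0\<bar> \<le> Kall * s^2"
        by (rule UE[OF pX' pY' s0 s\<rho>0]) (use sX sY s0 in auto)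
      moreover have "\<bar>lin (P i j) (f i j) (g i j) (mX$i) (mX'$i) (mY$j) (mY'$j) D0 D0\<bar> \<le> Fb * s"
        using lin_zero_bound[OF s0, of "mX'$i" "mX$i" "mY'$j" "mY$j" "P i j" "f i j" "g i j" D0] sX sY Fb[of i j] s0
        by (smt (verit) mult_right_mono)
      moreover have "Kall * s^2 \<le> Kall * \<rho>0 * s"
        using Kall0 s0 s\<rho>0 by (simp add: power2_eq_square mult_left_mono mult_right_mono mult.assoc)
      ultimately have a2: "\<bar>dW \<epsilon> (mX'$i) (mY'$j) D0 - dW \<epsilon> (mX$i) (mY$j) D0\<bar> \<le> L1 * s"
        unfolding L1_def by (simp add: distrib_right abs_le_iff)
      have "\<bar>dW \<epsilon> (mX'$i) (mY'$j) D1 - dW \<epsilon> (mX$i) (mY$j) D0\<bar> \<le> M + L1 * s" using a1 a2 by linarith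
      then have "\<bar>(1 - \<delta>) * (dW \<epsilon> (mX'$i) (mY'$j) D1 - dW \<epsilon> (mX$i) (mY$j) D0)\<bar> \<le> (1 - \<delta>) * (M + L1 * s)"
        using d1 by (simp add: abs_mult mult_left_mono)
      moreover have "\<bar>\<delta> * (C'$i$j - C$i$j)\<bar> \<le> \<delta> * s" using sC d0 by (simp add: abs_mult mult_left_mono)
      ultimately show ?thesis unfolding eq0 by linarith
    qed
    have "M \<le> \<delta> * s + (1 - \<delta>) * (M + L1 * s)" using step[of "fst q0" "snd q0"] unfolding M_def .
    then have "\<delta> * M \<le> \<delta> * s + (1 - \<delta>) * L1 * s" by (simp add: algebra_simps)
    also have "\<dots> \<le> \<delta> * s + L1 * s"
    proof -
      have "0 \<le> L1 * s" using L10 s0 by simp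
      then have "(1 - \<delta>) * (L1 * s) \<le> 1 * (L1 * s)" using d0 by (intro mult_right_mono) auto
      then show ?thesis by (simp add: mult.assoc)
    qed
    also have "\<delta> * s + L1 * s = \<delta> * (L2 * s)" unfolding L2_def using d0 by (simp add: field_simps)
    finally have "\<delta> * M \<le> \<delta> * (L2 * s)" .
    then have ML2: "M \<le> L2 * s" using d0 by simp
    define r where "r = L2 * s"
    have r0: "0 \<le> r" unfolding r_def using L21 s0 by simp
    have sr: "s \<le> r" unfolding r_def using L21 s0 by (simp add: mult_le_cancel_right1)
    have "\<bar>dW \<epsilon> (mX'$i) (mY'$j) D1 - dW \<epsilon> (mX$i) (mY$j) D0 - lin (P i j) (f i j) (g i j) (mX$i) (mX'$i) (mY$j) (mY'$j) D0 D1\<bar> \<le> Kall * r^2"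
    proof (rule UE[OF pX' pY' r0])
      show "r \<le> \<rho>0" unfolding r_def by (rule L2s)
      show "\<forall>k l. \<bar>D1$k$l - D0$k$l\<bar> \<le> r" using M ML2 unfolding r_def by (meson order_trans)
      show "\<forall>k. \<bar>mX'$i$k - mX$i$k\<bar> \<le> r" using sX sr by (meson order_trans)
      show "\<forall>l. \<bar>mY'$j$l - mY$j$l\<bar> \<le> r" using sY sr by (meson order_trans)
    qed
    also have "Kall * r^2 = Kall * L2^2 * s^2" unfolding r_def by (simp add: power_mult_distrib)
    finally have R: "\<bar>dW \<epsilon> (mX'$i) (mY'$j) D1 - dW \<epsilon> (mX$i) (mY$j) D0 - lin (P i j) (f i j) (g i j) (mX$i) (mX'$i) (mY$j) (mY'$j) D0 D1\<bar> \<le> Kall * L2^2 * s^2" .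
    have "D1$i$j - D0$i$j - \<delta> * (C'$i$j - C$i$j) - (1 - \<delta>) * lin (P i j) (f i j) (g i j) (mX$i) (mX'$i) (mY$j) (mY'$j) D0 D1
       = (1 - \<delta>) * (dW \<epsilon> (mX'$i) (mY'$j) D1 - dW \<epsilon> (mX$i) (mY$j) D0 - lin (P i j) (f i j) (g i j) (mX$i) (mX'$i) (mY$j) (mY'$j) D0 D1)"
      unfolding eq0 by (simp add: algebra_simps)
    also have "\<bar>\<dots>\<bar> \<le> (1 - \<delta>) * (Kall * L2^2 * s^2)" unfolding abs_mult using d1 R by (simp add: mult_left_mono)
    also have "\<dots> \<le> 1 * (Kall * L2^2 * s^2)" using d0 Kall0 by (intro mult_right_mono) auto
    finally show "\<bar>Cinf \<delta> \<epsilon> C' mX' mY' $i$j - Cinf \<delta> \<epsilon> C mX mY $i$j - \<delta> * (C'$i$j - C$i$j)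
             - (1 - \<delta>) * lin (P i j) (f i j) (g i j) (mX$i) (mX'$i) (mY$j) (mY'$j) (Cinf \<delta> \<epsilon> C mX mY) (Cinf \<delta> \<epsilon> C' mX' mY')\<bar> \<le> Kall * L2^2 * s^2"
      unfolding D0_def D1_def by simp
  qed
qed



lemma matrix_inv_left:
  fixes A :: "real^'n^'n"
  assumes "invertible A"
  shows "matrix_inv A ** A = mat 1"
proof -
  have "\<exists>A'. A ** A' = mat 1 \<and> A' ** A = mat 1" using assms unfolding invertible_def by blast
  then have "A ** matrix_inv A = mat 1 \<and> matrix_inv A ** A = mat 1"
    unfolding matrix_inv_def by (rule someI_ex)
  then show ?thesis by simp
qed

lemma solve_inv:
  fixes A :: "real^'n^'n"
  assumes "invertible A" "A *v v = w"
  shows "v = matrix_inv A *v w"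
  using assms matrix_inv_left[OF assms(1)]
  by (metis matrix_vector_mul_assoc matrix_vector_mul_lid)

lemma mv_scale: "(M :: real^'m^'n) *v (c *\<^sub>R v) = c *\<^sub>R (M *v v)"
  by (simp add: vec_eq_iff mat_vec_comp sum_distrib_left algebra_simps)

lemma mv_add: "(M :: real^'m^'n) *v (v + w) = M *v v + M *v w"
  by (simp add: vec_eq_iff mat_vec_comp sum.distrib algebra_simps)

lemma mv_entry_bound:
  fixes B :: "real^'m^'n" and v :: "real^'m"
  assumes "\<forall>c. \<bar>v$c\<bar> \<le> m"
  shows "\<bar>(B *v v)$r\<bar> \<le> (\<Sum>c\<in>UNIV. \<bar>B$r$c\<bar>) * m"
proof -
  have "\<bar>(B *v v)$r\<bar> = \<bar>\<Sum>c\<in>UNIV. B$r$c * v$c\<bar>" by (simp add: mat_vec_comp)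
  also have "\<dots> \<le> (\<Sum>c\<in>UNIV. \<bar>B$r$c * v$c\<bar>)" by (rule sum_abs)
  also have "\<dots> \<le> (\<Sum>c\<in>UNIV. \<bar>B$r$c\<bar> * m)" using assms by (intro sum_mono) (simp add: abs_mult mult_left_mono)
  finally show ?thesis by (simp add: sum_distrib_right)
qed

lemma L_linear:
  fixes \<Delta> :: "real^('x::finite\<times>'y::finite)^('x\<times>'y)" and \<Gamma> :: "real^('x\<times>'x)^('x\<times>'y)" and \<Theta> :: "real^('y\<times>'y)^('x\<times>'y)"
  shows "linear (\<lambda>(dC :: real^'y^'x, dX :: real^'x^'x, dY :: real^'y^'y). \<chi> i j.
              (\<Sum>c\<in>UNIV. \<Delta> $ (i, j) $ c * dC $ fst c $ snd c)
            + (\<Sum>c\<in>UNIV. \<Gamma> $ (i, j) $ c * dX $ fst c $ snd c)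
            + (\<Sum>c\<in>UNIV. \<Theta> $ (i, j) $ c * dY $ fst c $ snd c))"
proof (rule linearI)
  fix u v :: "(real^'y^'x) \<times> (real^'x^'x) \<times> (real^'y^'y)"
  obtain u1 u2 u3 where u: "u = (u1, u2, u3)" by (cases u) auto
  obtain v1 v2 v3 where v: "v = (v1, v2, v3)" by (cases v) auto
  show "(\<lambda>(dC, dX, dY). \<chi> i j.
              (\<Sum>c\<in>UNIV. \<Delta> $ (i, j) $ c * dC $ fst c $ snd c)
            + (\<Sum>c\<in>UNIV. \<Gamma> $ (i, j) $ c * dX $ fst c $ snd c)
            + (\<Sum>c\<in>UNIV. \<Theta> $ (i, j) $ c * dY $ fst c $ snd c)) (u + v) =
        (\<lambda>(dC, dX, dY). \<chi> i j.
              (\<Sum>c\<in>UNIV. \<Delta> $ (i, j) $ c * dC $ fst c $ snd c)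
            + (\<Sum>c\<in>UNIV. \<Gamma> $ (i, j) $ c * dX $ fst c $ snd c)
            + (\<Sum>c\<in>UNIV. \<Theta> $ (i, j) $ c * dY $ fst c $ snd c)) u +
        (\<lambda>(dC, dX, dY). \<chi> i j.
              (\<Sum>c\<in>UNIV. \<Delta> $ (i, j) $ c * dC $ fst c $ snd c)
            + (\<Sum>c\<in>UNIV. \<Gamma> $ (i, j) $ c * dX $ fst c $ snd c)
            + (\<Sum>c\<in>UNIV. \<Theta> $ (i, j) $ c * dY $ fst c $ snd c)) v"
    unfolding u v by (simp add: vec_eq_iff distrib_left sum.distrib algebra_simps)
next
  fix k :: real and u :: "(real^'y^'x) \<times> (real^'x^'x) \<times> (real^'y^'y)"
  obtain u1 u2 u3 where u: "u = (u1, u2, u3)" by (cases u) auto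
  show "(\<lambda>(dC, dX, dY). \<chi> i j.
              (\<Sum>c\<in>UNIV. \<Delta> $ (i, j) $ c * dC $ fst c $ snd c)
            + (\<Sum>c\<in>UNIV. \<Gamma> $ (i, j) $ c * dX $ fst c $ snd c)
            + (\<Sum>c\<in>UNIV. \<Theta> $ (i, j) $ c * dY $ fst c $ snd c)) (k *\<^sub>R u) =
        k *\<^sub>R (\<lambda>(dC, dX, dY). \<chi> i j.
              (\<Sum>c\<in>UNIV. \<Delta> $ (i, j) $ c * dC $ fst c $ snd c)
            + (\<Sum>c\<in>UNIV. \<Gamma> $ (i, j) $ c * dX $ fst c $ snd c)
            + (\<Sum>c\<in>UNIV. \<Theta> $ (i, j) $ c * dY $ fst c $ snd c)) u"
    unfolding u by (simp add: vec_eq_iff sum_distrib_left algebra_simps)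
qed

lemma final:
  fixes C :: "real^'y^'x" and mX :: "real^'x^'x" and mY :: "real^'y^'y"
    and \<delta> \<epsilon> :: real
    and P :: "'x \<Rightarrow> 'y \<Rightarrow> real^'y^'x"
    and f :: "'x \<Rightarrow> 'y \<Rightarrow> real^'x" and g :: "'x \<Rightarrow> 'y \<Rightarrow> real^'y"
  assumes X: "row_stochastic mX" and Y: "row_stochastic mY"
    and C0: "\<forall>i j. 0 \<le> C$i$j"
    and d0: "0 < \<delta>" and d1: "\<delta> \<le> 1" and e: "0 < \<epsilon>"
    and popt: "\<forall>i j. is_opt_plan \<epsilon> (mX$i) (mY$j) (Cinf \<delta> \<epsilon> C mX mY) (P i j)"
    and dopt: "\<forall>i j. is_dual_opt \<epsilon> (mX$i) (mY$j) (Cinf \<delta> \<epsilon> C mX mY) (f i j) (g i j)"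
    and PmD: "Pm = ((\<chi> r c. P (fst r) (snd r) $ fst c $ snd c) :: real^('x\<times>'y)^('x\<times>'y))"
    and FmD: "Fm = ((\<chi> r c. if fst r = fst c then f (fst r) (snd r) $ snd c else 0) :: real^('x\<times>'x)^('x\<times>'y))"
    and GmD: "Gm = ((\<chi> r c. if snd r = fst c then g (fst r) (snd r) $ snd c else 0) :: real^('y\<times>'y)^('x\<times>'y))"
    and AD: "A = mat 1 - (1 - \<delta>) *\<^sub>R Pm"
    and \<Delta>D: "\<Delta> = \<delta> *\<^sub>R matrix_inv A"
    and \<Gamma>D: "\<Gamma> = (1 - \<delta>) *\<^sub>R (matrix_inv A ** Fm)"
    and \<Theta>D: "\<Theta> = (1 - \<delta>) *\<^sub>R (matrix_inv A ** Gm)"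
  shows "invertible A \<and>
        ((\<lambda>(C', mX', mY'). Cinf \<delta> \<epsilon> C' mX' mY') has_derivative
          (\<lambda>(dC, dX, dY). \<chi> i j.
              (\<Sum>c\<in>UNIV. \<Delta> $ (i, j) $ c * dC $ fst c $ snd c)
            + (\<Sum>c\<in>UNIV. \<Gamma> $ (i, j) $ c * dX $ fst c $ snd c)
            + (\<Sum>c\<in>UNIV. \<Theta> $ (i, j) $ c * dY $ fst c $ snd c)))
        (at (C, mX, mY) within {(C', mX', mY'). row_stochastic mX' \<and> row_stochastic mY'})"
proof -
  have Pc: "P i j \<in> couplings (mX$i) (mY$j)" for i j using popt unfolding is_opt_plan_def by blast
  have invA: "invertible A" unfolding AD
  proof (rule invertible_A[OF _ _ d0 d1])
    show "\<forall>r c. 0 \<le> Pm$r$c" unfolding PmD using coupling_nonneg[OF Pc] by simp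
    show "\<forall>r. (\<Sum>c\<in>UNIV. Pm$r$c) = 1"
      unfolding PmD using coupling_mass[OF Pc row_stochastic_pv[OF X]] by (simp add: sum_pair_UNIV)
  qed
  define Ai where "Ai = matrix_inv A"
  obtain K \<rho> where \<rho>: "0 < \<rho>" and K0: "0 \<le> K" and exp: "\<forall>C' mX' mY' s. row_stochastic mX' \<and> row_stochastic mY' \<and> 0 \<le> s \<and> s \<le> \<rho>
      \<and> (\<forall>i j. \<bar>C'$i$j - C$i$j\<bar> \<le> s) \<and> (\<forall>i j. \<bar>mX'$i$j - mX$i$j\<bar> \<le> s) \<and> (\<forall>i j. \<bar>mY'$i$j - mY$i$j\<bar> \<le> s)
      \<longrightarrow> (\<forall>i j. \<bar>Cinf \<delta> \<epsilon> C' mX' mY' $i$j - Cinf \<delta> \<epsilon> C mX mY $i$j - \<delta> * (C'$i$j - C$i$j)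
             - (1 - \<delta>) * lin (P i j) (f i j) (g i j) (mX$i) (mX'$i) (mY$j) (mY'$j) (Cinf \<delta> \<epsilon> C mX mY) (Cinf \<delta> \<epsilon> C' mX' mY')\<bar> \<le> K * s^2)"
    using fp_expansion[OF X Y d0 d1 e popt dopt] by blast
  define NA where "NA = (\<Sum>r\<in>UNIV. \<Sum>c\<in>UNIV. \<bar>Ai$r$c\<bar>)"
  have NA: "(\<Sum>c\<in>UNIV. \<bar>Ai$r$c\<bar>) \<le> NA" for r
    unfolding NA_def by (rule member_le_sum) (auto intro: sum_nonneg)
  have NA0: "0 \<le> NA" unfolding NA_def by (auto intro: sum_nonneg)
  define Kt where "Kt = real CARD('x) * real CARD('y) * (NA * K)"
  have Kt0: "0 \<le> Kt" unfolding Kt_def using NA0 K0 by simp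
  define F :: "(real^'y^'x) \<times> (real^'x^'x) \<times> (real^'y^'y) \<Rightarrow> real^'y^'x"
    where "F = (\<lambda>(C', mX', mY'). Cinf \<delta> \<epsilon> C' mX' mY')"
  define L where "L = (\<lambda>(dC :: real^'y^'x, dX :: real^'x^'x, dY :: real^'y^'y). \<chi> i j.
              (\<Sum>c\<in>UNIV. \<Delta> $ (i, j) $ c * dC $ fst c $ snd c)
            + (\<Sum>c\<in>UNIV. \<Gamma> $ (i, j) $ c * dX $ fst c $ snd c)
            + (\<Sum>c\<in>UNIV. \<Theta> $ (i, j) $ c * dY $ fst c $ snd c))"
  define S :: "((real^'y^'x) \<times> (real^'x^'x) \<times> (real^'y^'y)) set"
    where "S = {(C', mX', mY'). row_stochastic mX' \<and> row_stochastic mY'}"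
  have key: "norm (F y - F (C, mX, mY) - L (y - (C, mX, mY))) \<le> Kt * (norm (y - (C, mX, mY)))^2"
    if yS: "y \<in> S" and yr: "norm (y - (C, mX, mY)) \<le> \<rho>" for y
  proof -
    obtain C' mX' mY' where y: "y = (C', mX', mY')" by (cases y) auto
    define s where "s = norm (y - (C, mX, mY))"
    have X': "row_stochastic mX'" and Y': "row_stochastic mY'" using yS unfolding y S_def by auto
    have ydiff: "y - (C, mX, mY) = (C' - C, mX' - mX, mY' - mY)" unfolding y by simp
    have nC: "norm (C' - C) \<le> s" unfolding s_def ydiff by (rule norm_fst_le)
    have nX: "norm (mX' - mX) \<le> s" unfolding s_def ydiff
      using norm_fst_le[where x="mX' - mX" and y="mY' - mY"] norm_snd_le[where x="C' - C" and y="(mX' - mX, mY' - mY)"] by linarith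
    have nY: "norm (mY' - mY) \<le> s" unfolding s_def ydiff
      using norm_snd_le[where x="mX' - mX" and y="mY' - mY"] norm_snd_le[where x="C' - C" and y="(mX' - mX, mY' - mY)"] by linarith
    have sC: "\<forall>i j. \<bar>C'$i$j - C$i$j\<bar> \<le> s" using entry_le_norm[of "C' - C"] nC by (metis order_trans vector_minus_component)
    have sX: "\<forall>i j. \<bar>mX'$i$j - mX$i$j\<bar> \<le> s" using entry_le_norm[of "mX' - mX"] nX by (metis order_trans vector_minus_component)
    have sY: "\<forall>i j. \<bar>mY'$i$j - mY$i$j\<bar> \<le> s" using entry_le_norm[of "mY' - mY"] nY by (metis order_trans vector_minus_component)
    have s0: "0 \<le> s" unfolding s_def by simp
    have s\<rho>: "s \<le> \<rho>" unfolding s_def by (rule yr)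
    define D0 where "D0 = Cinf \<delta> \<epsilon> C mX mY"
    define D1 where "D1 = Cinf \<delta> \<epsilon> C' mX' mY'"
    define R where "R i j = D1$i$j - D0$i$j - \<delta> * (C'$i$j - C$i$j)
             - (1 - \<delta>) * lin (P i j) (f i j) (g i j) (mX$i) (mX'$i) (mY$j) (mY'$j) D0 D1" for i j
    have Rb: "\<bar>R i j\<bar> \<le> K * s^2" for i j
      using exp X' Y' s0 s\<rho> sC sX sY unfolding R_def D0_def D1_def by blast
    define vD :: "real^('x\<times>'y)" where "vD = (\<chi> q. (D1 - D0)$fst q$snd q)"
    define vC :: "real^('x\<times>'y)" where "vC = (\<chi> q. (C' - C)$fst q$snd q)"
    define vX :: "real^('x\<times>'x)" where "vX = (\<chi> q. (mX' - mX)$fst q$snd q)"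
    define vY :: "real^('y\<times>'y)" where "vY = (\<chi> q. (mY' - mY)$fst q$snd q)"
    define Rv :: "real^('x\<times>'y)" where "Rv = (\<chi> q. R (fst q) (snd q))"
    have Pv: "(Pm *v vD)$q = (\<Sum>k\<in>UNIV. \<Sum>l\<in>UNIV. P (fst q) (snd q) $k$l * (D1$k$l - D0$k$l))" for q
      unfolding PmD vD_def mat_vec_comp by (simp add: sum_pair_UNIV)
    have Fv: "(Fm *v vX)$q = (\<Sum>k\<in>UNIV. f (fst q) (snd q) $k * (mX'$(fst q)$k - mX$(fst q)$k))" for q
    proof -
      have "(Fm *v vX)$q = (\<Sum>k'\<in>UNIV. \<Sum>k\<in>UNIV. (if fst q = k' then f (fst q) (snd q) $ k else 0) * (mX'$k'$k - mX$k'$k))"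
        unfolding FmD vX_def mat_vec_comp by (simp add: sum_pair_UNIV cong: if_cong)
      also have "\<dots> = (\<Sum>k'\<in>UNIV. if fst q = k' then (\<Sum>k\<in>UNIV. f (fst q) (snd q) $ k * (mX'$k'$k - mX$k'$k)) else 0)"
        by (intro sum.cong) auto
      finally show ?thesis by simp
    qed
    have Gv: "(Gm *v vY)$q = (\<Sum>l\<in>UNIV. g (fst q) (snd q) $l * (mY'$(snd q)$l - mY$(snd q)$l))" for q
    proof -
      have "(Gm *v vY)$q = (\<Sum>l'\<in>UNIV. \<Sum>l\<in>UNIV. (if snd q = l' then g (fst q) (snd q) $ l else 0) * (mY'$l'$l - mY$l'$l))"
        unfolding GmD vY_def mat_vec_comp by (simp add: sum_pair_UNIV cong: if_cong)
      also have "\<dots> = (\<Sum>l'\<in>UNIV. if snd q = l' then (\<Sum>l\<in>UNIV. g (fst q) (snd q) $ l * (mY'$l'$l - mY$l'$l)) else 0)"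
        by (intro sum.cong) auto
      finally show ?thesis by simp
    qed
    have AvD: "A *v vD = \<delta> *\<^sub>R vC + (1 - \<delta>) *\<^sub>R (Fm *v vX + Gm *v vY) + Rv"
    proof (subst vec_eq_iff, intro allI)
      fix q :: "'x \<times> 'y"
      obtain i j where q: "q = (i, j)" by (cases q) auto
      have "(A *v vD)$q = vD$q - (1 - \<delta>) * (Pm *v vD)$q"
        unfolding AD by (simp add: matrix_vector_mult_diff_rdistrib scaleR_matrix_vector_assoc[symmetric])
      also have "\<dots> = (\<delta> *\<^sub>R vC + (1 - \<delta>) *\<^sub>R (Fm *v vX + Gm *v vY) + Rv)$q"
        unfolding q Pv by (simp add: Fv Gv vD_def vC_def Rv_def R_def lin_def algebra_simps)
      finally show "(A *v vD)$q = (\<delta> *\<^sub>R vC + (1 - \<delta>) *\<^sub>R (Fm *v vX + Gm *v vY) + Rv)$q" .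
    qed
    have vDs: "vD = \<delta> *\<^sub>R (Ai *v vC) + (1 - \<delta>) *\<^sub>R (Ai *v (Fm *v vX)) + (1 - \<delta>) *\<^sub>R (Ai *v (Gm *v vY)) + Ai *v Rv"
      using solve_inv[OF invA AvD] unfolding Ai_def[symmetric]
      by (simp only: mv_add mv_scale scaleR_add_right add.assoc)
    have Lval: "L (y - (C, mX, mY)) = (\<chi> i j. (\<delta> *\<^sub>R (Ai *v vC) + (1 - \<delta>) *\<^sub>R (Ai *v (Fm *v vX)) + (1 - \<delta>) *\<^sub>R (Ai *v (Gm *v vY)))$(i,j))"
    proof -
      have 1: "(\<Sum>c\<in>UNIV. \<Delta> $ (i, j) $ c * (C' - C) $ fst c $ snd c) = \<delta> * (Ai *v vC)$(i,j)" for i j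
        unfolding \<Delta>D Ai_def[symmetric] vC_def mat_vec_comp by (simp add: sum_distrib_left mult.assoc)
      have 2: "(\<Sum>c\<in>UNIV. \<Gamma> $ (i, j) $ c * (mX' - mX) $ fst c $ snd c) = (1 - \<delta>) * (Ai *v (Fm *v vX))$(i,j)" for i j
        unfolding \<Gamma>D Ai_def[symmetric] matrix_vector_mul_assoc
        by (subst mat_vec_comp) (simp add: vX_def sum_distrib_left mult.assoc)
      have 3: "(\<Sum>c\<in>UNIV. \<Theta> $ (i, j) $ c * (mY' - mY) $ fst c $ snd c) = (1 - \<delta>) * (Ai *v (Gm *v vY))$(i,j)" for i j
        unfolding \<Theta>D Ai_def[symmetric] matrix_vector_mul_assoc
        by (subst mat_vec_comp) (simp add: vY_def sum_distrib_left mult.assoc)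
      show ?thesis unfolding ydiff L_def prod.case 1 2 3 by (simp add: vec_eq_iff)
    qed
    have diff: "F y - F (C, mX, mY) - L (y - (C, mX, mY)) = (\<chi> i j. (Ai *v Rv)$(i,j))"
    proof -
      have "F y - F (C, mX, mY) = (\<chi> i j. vD$(i,j))" unfolding F_def y vD_def D0_def D1_def by (simp add: vec_eq_iff)
      then show ?thesis unfolding Lval vDs by (simp add: vec_eq_iff)
    qed
    have ent: "\<forall>i j. \<bar>(\<chi> i j. (Ai *v Rv)$(i,j))$i$j\<bar> \<le> NA * K * s^2"
    proof (intro allI)
      fix i j
      have "\<bar>(Ai *v Rv)$(i,j)\<bar> \<le> (\<Sum>c\<in>UNIV. \<bar>Ai$(i,j)$c\<bar>) * (K * s^2)"
        by (rule mv_entry_bound) (simp add: Rv_def Rb)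
      also have "\<dots> \<le> NA * (K * s^2)" using NA K0 by (intro mult_right_mono) auto
      finally show "\<bar>(\<chi> i j. (Ai *v Rv)$(i,j))$i$j\<bar> \<le> NA * K * s^2" by (simp add: mult.assoc)
    qed
    have "norm (F y - F (C, mX, mY) - L (y - (C, mX, mY))) \<le> real CARD('x) * real CARD('y) * (NA * K * s^2)"
      unfolding diff by (rule norm_le_entries[OF ent])
    then show ?thesis unfolding Kt_def s_def by (simp add: mult.assoc)
  qed
  have bl: "bounded_linear L" unfolding L_def linear_conv_bounded_linear[symmetric] by (rule L_linear)
  have "(F has_derivative L) (at (C, mX, mY) within S)"
    unfolding has_derivative_within_alt
  proof (intro conjI bl allI impI)
    fix \<eta> :: real assume \<eta>: "0 < \<eta>"
    define d where "d = min \<rho> (\<eta> / (Kt + 1))"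
    have d: "0 < d" unfolding d_def using \<rho> \<eta> Kt0 by simp
    show "\<exists>d>0. \<forall>y\<in>S. norm (y - (C, mX, mY)) < d \<longrightarrow> norm (F y - F (C, mX, mY) - L (y - (C, mX, mY))) \<le> \<eta> * norm (y - (C, mX, mY))"
    proof (intro exI[of _ d] conjI d ballI impI)
      fix y assume yS: "y \<in> S" and yd: "norm (y - (C, mX, mY)) < d"
      define s where "s = norm (y - (C, mX, mY))"
      have s0: "0 \<le> s" unfolding s_def by simp
      have "s \<le> \<rho>" using yd unfolding s_def d_def by simp
      then have "norm (F y - F (C, mX, mY) - L (y - (C, mX, mY))) \<le> Kt * s^2" unfolding s_def by (rule key[OF yS])
      also have "Kt * s^2 = (Kt * s) * s" by (simp add: power2_eq_square)
      also have "\<dots> \<le> \<eta> * s"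
      proof (rule mult_right_mono[OF _ s0])
        have "s \<le> \<eta> / (Kt + 1)" using yd unfolding s_def d_def by simp
        then have "Kt * s \<le> Kt * (\<eta> / (Kt + 1))" using Kt0 by (intro mult_left_mono) auto
        also have "\<dots> \<le> \<eta>" using Kt0 \<eta> by (simp add: field_simps)
        finally show "Kt * s \<le> \<eta>" .
      qed
      finally show "norm (F y - F (C, mX, mY) - L (y - (C, mX, mY))) \<le> \<eta> * norm (y - (C, mX, mY))" unfolding s_def .
    qed
  qed
  then show ?thesis using invA unfolding F_def L_def S_def by simp
qed

theorem theorem22:
  fixes C :: "real^'y^'x" and mX :: "real^'x^'x" and mY :: "real^'y^'y"
    and \<delta> \<epsilon> :: real
    and P :: "'x \<Rightarrow> 'y \<Rightarrow> real^'y^'x"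
    and f :: "'x \<Rightarrow> 'y \<Rightarrow> real^'x" and g :: "'x \<Rightarrow> 'y \<Rightarrow> real^'y"
  assumes "row_stochastic mX" and "row_stochastic mY"
    and "\<forall>i j. 0 \<le> C$i$j"
    and "0 < \<delta>" and "\<delta> \<le> 1" and "0 < \<epsilon>"
    and "\<forall>i j. is_opt_plan \<epsilon> (mX$i) (mY$j) (Cinf \<delta> \<epsilon> C mX mY) (P i j)"
    and "\<forall>i j. is_dual_opt \<epsilon> (mX$i) (mY$j) (Cinf \<delta> \<epsilon> C mX mY) (f i j) (g i j)"
  shows
    "let Pm = (\<chi> r c. P (fst r) (snd r) $ fst c $ snd c) :: real^('x\<times>'y)^('x\<times>'y);
         Fm = (\<chi> r c. if fst r = fst c then f (fst r) (snd r) $ snd c else 0) :: real^('x\<times>'x)^('x\<times>'y);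
         Gm = (\<chi> r c. if snd r = fst c then g (fst r) (snd r) $ snd c else 0) :: real^('y\<times>'y)^('x\<times>'y);
         A = mat 1 - (1 - \<delta>) *\<^sub>R Pm;
         \<Delta> = \<delta> *\<^sub>R matrix_inv A;
         \<Gamma> = (1 - \<delta>) *\<^sub>R (matrix_inv A ** Fm);
         \<Theta> = (1 - \<delta>) *\<^sub>R (matrix_inv A ** Gm)
     in invertible A \<and>
        ((\<lambda>(C', mX', mY'). Cinf \<delta> \<epsilon> C' mX' mY') has_derivative
          (\<lambda>(dC, dX, dY). \<chi> i j.
              (\<Sum>c\<in>UNIV. \<Delta> $ (i, j) $ c * dC $ fst c $ snd c)
            + (\<Sum>c\<in>UNIV. \<Gamma> $ (i, j) $ c * dX $ fst c $ snd c)
            + (\<Sum>c\<in>UNIV. \<Theta> $ (i, j) $ c * dY $ fst c $ snd c)))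
        (at (C, mX, mY) within {(C', mX', mY'). row_stochastic mX' \<and> row_stochastic mY'})"
    unfolding Let_def
  by (rule final[OF assms refl refl refl refl refl refl refl])

end
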